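(* Let $\Gamma$ be a finite dynamic game with ordinal preferences and perfect recall, and let $i\in I$. A strategy $s^*_i\in S_i$ is sequentially rational if and only if it is not conditionally B-dominated with respect to $S$.
   Context: A finite dynamic game with ordinal preferences and perfect recall $\Gamma$ consists of: a finite set of players $I$; a finite set $X$ of histories (finite sequences of action profiles, possibly with simultaneous moves), ordered by the prefix relation, with the empty history as root, and the set $Z\subseteq X$ of terminal histories (outcomes); for each player $i$ a partition $H_i$ of the non-terminal histories at which $i$ is active (has at least two available actions) into information sets, such that $i$'s available actions $A_i(h)$ are the same at all histories of $h$; perfect recall; and for each player $i$ a complete, transitive preference relation $\succsim_i$ on $Z$ (with asymmetric part $\succ_i$ and symmetric part $\sim_i$). A standard strategy of $i$ selects an action in $A_i(h)$ for each $h\in H_i$; two standard strategies are behaviorally equivalent if they allow the same information sets and prescribe the same actions there; a strategy of $i$ is an equivalence class of behaviorally equivalent standard strategies. $S_i$ is $i$'s (finite) set of strategies, $S=\prod_{j\in I}S_j$, $S_{-i}=\prod_{j\neq i}S_j$, and $\zeta:S\to Z$ maps a strategy profile to the terminal history it reaches. For $h\in H_i$, $S_i(h)$ and $S_{-i}(h)$ are the sets of strategies of $i$, resp. strategy profiles of the others, that reach $h$ (by perfect recall the profiles reaching $h$ are exactly $S_i(h)\times S_{-i}(h)$). $H_i(s_i):=\{h\in H_i: s_i\in S_i(h)\}$. A restriction is a nonempty set $R=\prod_{j\in I}R_j\subseteq S$. For $h\in H_i$: $R_i(h)=R_i\cap S_i(h)$, $R_{-i}(h)=R_{-i}\cap S_{-i}(h)$,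 $R^i(h)=R_i(h)\times R_{-i}(h)$. Dominance: for a set $P=P_i\times P_{-i}$ with $P_i\subseteq S_i$, $P_{-i}\subseteq S_{-i}$ ($P_{-i}$ need not be a product), $s_i\in P_i$ is weakly dominated relative to $P$ by $t_i\in P_i$ if $\zeta(t_i,s_{-i})\succsim_i\zeta(s_i,s_{-i})$ for all $s_{-i}\in P_{-i}$, with $\succ_i$ for at least one $s_{-i}\in P_{-i}$. $s_i\in P_i$ is B-dominated with respect to $P$ if for every nonempty $Q_{-i}\subseteq P_{-i}$, $s_i$ is weakly dominated relative to $P_i\times Q_{-i}$ by some strategy in $P_i$. Given a restriction $R$, $s_i\in R_i$ is conditionally B-dominated with respect to $R$ if there is $h\in H_i(s_i)$ with $R^i(h)\neq\emptyset$ such that $s_i$ is B-dominated with respect to $R^i(h)$. Utilities and beliefs: $\mathcal U_i$ is the set of functions $u_i:Z\to\mathbb R$ with $u_i(z)\ge u_i(z')\iff z\succsim_i z'$. Let $\mathcal H_i=\{S_{-i}(h):h\in H_i\}$. A conditional probability system (CPS) on $(S_{-i},\mathcal H_i)$ is a family $(\mu_i(\cdot\mid E))_{E\in\mathcal H_i}$ of probability measures on $S_{-i}$ with $\mu_i(E\mid E)=1$ and, whenever $A\subseteq E'\subseteq E$ with $E,E'\in\mathcal H_i$, $\mu_i(A\mid E)=\mu_i(A\mid E')\,\mu_i(E'\mid E)$. A strategy $s^*_i\in S_i$ is sequentially rational if there exist $u_i\in\mathcal U_i$ and a CPS $\mu_i$ such that for every $h\in H_i(s^*_i)$ and every $s_i\in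 S_i(h)$: $\sum_{s_{-i}\in S_{-i}}u_i(\zeta(s^*_i,s_{-i}))\mu_i(\{s_{-i}\}\mid S_{-i}(h))\ge\sum_{s_{-i}\in S_{-i}}u_i(\zeta(s_i,s_{-i}))\mu_i(\{s_{-i}\}\mid S_{-i}(h))$. *)

theory Defs
  imports Complex_Main "HOL-Library.FuncSet" "HOL-Library.Sublist"
begin

section \<open>Finite dynamic games with ordinal preferences (possibly simultaneous moves)\<close>

type_synonym ('i,'a) hist = "('i \<Rightarrow> 'a) list"
type_synonym ('i,'a) iset = "('i,'a) hist set"
type_synonym ('i,'a) stdstrat = "('i,'a) iset \<Rightarrow> 'a"
type_synonym ('i,'a) strat = "('i,'a) stdstrat set"

record ('i,'a) game =
  pl   :: "'i set"
  hist :: "('i,'a) hist set"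
  acts :: "'i \<Rightarrow> ('i,'a) hist \<Rightarrow> 'a set"
  info :: "'i \<Rightarrow> ('i,'a) iset set"
  pref :: "'i \<Rightarrow> ('i,'a) hist \<Rightarrow> ('i,'a) hist \<Rightarrow> bool"

definition terminal :: "('i,'a) game \<Rightarrow> ('i,'a) hist \<Rightarrow> bool" where
  "terminal G x \<longleftrightarrow> x \<in> hist G \<and> (\<forall>a. x @ [a] \<notin> hist G)"

definition Zs :: "('i,'a) game \<Rightarrow> ('i,'a) hist set" where
  "Zs G = {z. terminal G z}"

definition nonterm :: "('i,'a) game \<Rightarrow> ('i,'a) hist \<Rightarrow> bool" where
  "nonterm G x \<longleftrightarrow> x \<in> hist G \<and> \<not> terminal G x"

definition active :: "('i,'a) game \<Rightarrow> 'i \<Rightarrow> ('i,'a) hist \<Rightarrow> bool" where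
  "active G j x \<longleftrightarrow> nonterm G x \<and> j \<in> pl G \<and> (\<exists>a\<in>acts G j x. \<exists>b\<in>acts G j x. a \<noteq> b)"

definition infoset :: "('i,'a) game \<Rightarrow> 'i \<Rightarrow> ('i,'a) hist \<Rightarrow> ('i,'a) iset" where
  "infoset G j x = (THE h. h \<in> info G j \<and> x \<in> h)"

definition actsI :: "('i,'a) game \<Rightarrow> 'i \<Rightarrow> ('i,'a) iset \<Rightarrow> 'a set" where
  "actsI G j h = acts G j (SOME x. x \<in> h)"

definition experience :: "('i,'a) game \<Rightarrow> 'i \<Rightarrow> ('i,'a) hist \<Rightarrow> (('i,'a) iset \<times> 'a) list" where
  "experience G j x = concat (map (\<lambda>k. if active G j (take k x)
        then [(infoset G j (take k x), (x ! k) j)] else []) [0..<length x])"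

definition perfect_recall :: "('i,'a) game \<Rightarrow> bool" where
  "perfect_recall G \<longleftrightarrow> (\<forall>j\<in>pl G. \<forall>h\<in>info G j. \<forall>x\<in>h. \<forall>y\<in>h. experience G j x = experience G j y)"

definition wf_game :: "('i,'a) game \<Rightarrow> bool" where
  "wf_game G \<longleftrightarrow>
     finite (pl G) \<and> finite (hist G) \<and> [] \<in> hist G \<and>
     (\<forall>x y. x @ y \<in> hist G \<longrightarrow> x \<in> hist G) \<and>
     (\<forall>x. nonterm G x \<longrightarrow> (\<forall>j\<in>pl G. acts G j x \<noteq> {}) \<and>
            (\<forall>a. x @ [a] \<in> hist G \<longleftrightarrow> a \<in> (\<Pi>\<^sub>E j\<in>pl G. acts G j x))) \<and>
     (\<forall>j\<in>pl G.
        (\<forall>h\<in>info G j. h \<noteq> {}) \<and>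
        \<Union>(info G j) = {x. active G j x} \<and>
        (\<forall>h\<in>info G j. \<forall>h'\<in>info G j. h \<noteq> h' \<longrightarrow> h \<inter> h' = {}) \<and>
        (\<forall>h\<in>info G j. \<forall>x\<in>h. \<forall>y\<in>h. acts G j x = acts G j y)) \<and>
     perfect_recall G \<and>
     (\<forall>j\<in>pl G.
        (\<forall>z\<in>Zs G. \<forall>z'\<in>Zs G. pref G j z z' \<or> pref G j z' z) \<and>
        (\<forall>z\<in>Zs G. \<forall>z'\<in>Zs G. \<forall>z''\<in>Zs G. pref G j z z' \<longrightarrow> pref G j z' z'' \<longrightarrow> pref G j z z''))"

definition spref :: "('i,'a) game \<Rightarrow> 'i \<Rightarrow> ('i,'a) hist \<Rightarrow> ('i,'a) hist \<Rightarrow> bool" where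
  "spref G j z z' \<longleftrightarrow> pref G j z z' \<and> \<not> pref G j z' z"

definition std_strat :: "('i,'a) game \<Rightarrow> 'i \<Rightarrow> ('i,'a) stdstrat set" where
  "std_strat G j = {\<sigma>. (\<forall>h\<in>info G j. \<sigma> h \<in> actsI G j h) \<and> (\<forall>h. h \<notin> info G j \<longrightarrow> \<sigma> h = undefined)}"

text \<open>Action profile played at history x under a standard strategy profile
  (inactive players have a single feasible action).\<close>
definition move :: "('i,'a) game \<Rightarrow> ('i \<Rightarrow> ('i,'a) stdstrat) \<Rightarrow> ('i,'a) hist \<Rightarrow> ('i \<Rightarrow> 'a)" where
  "move G \<sigma> x = (\<lambda>j. if j \<in> pl G then
        (if active G j x then \<sigma> j (infoset G j x) else (THE a. a \<in> acts G j x))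
      else undefined)"

definition on_path :: "('i,'a) game \<Rightarrow> ('i \<Rightarrow> ('i,'a) stdstrat) \<Rightarrow> ('i,'a) hist \<Rightarrow> bool" where
  "on_path G \<sigma> x \<longleftrightarrow> x \<in> hist G \<and> (\<forall>k<length x. x ! k = move G \<sigma> (take k x))"

definition outcome_std :: "('i,'a) game \<Rightarrow> ('i \<Rightarrow> ('i,'a) stdstrat) \<Rightarrow> ('i,'a) hist" where
  "outcome_std G \<sigma> = (THE z. terminal G z \<and> on_path G \<sigma> z)"

definition allows :: "('i,'a) game \<Rightarrow> 'i \<Rightarrow> ('i,'a) stdstrat \<Rightarrow> ('i,'a) iset \<Rightarrow> bool" where
  "allows G j \<sigma> h \<longleftrightarrow> (\<exists>\<tau>. (\<forall>k\<in>pl G. \<tau> k \<in> std_strat G k) \<and> \<tau> j = \<sigma> \<and>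
                          (\<exists>x\<in>h. prefix x (outcome_std G \<tau>)))"

definition beq :: "('i,'a) game \<Rightarrow> 'i \<Rightarrow> ('i,'a) stdstrat \<Rightarrow> ('i,'a) stdstrat \<Rightarrow> bool" where
  "beq G j \<sigma> \<tau> \<longleftrightarrow> (\<forall>h\<in>info G j. allows G j \<sigma> h \<longleftrightarrow> allows G j \<tau> h) \<and>
                     (\<forall>h\<in>info G j. allows G j \<sigma> h \<longrightarrow> \<sigma> h = \<tau> h)"

definition Strat :: "('i,'a) game \<Rightarrow> 'i \<Rightarrow> ('i,'a) strat set" where
  "Strat G j = std_strat G j // {(\<sigma>, \<tau>). \<sigma> \<in> std_strat G j \<and> \<tau> \<in> std_strat G j \<and> beq G j \<sigma> \<tau>}"

definition Sminus :: "('i,'a) game \<Rightarrow> 'i \<Rightarrow> ('i \<Rightarrow> ('i,'a) strat) set" where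
  "Sminus G i = (\<Pi>\<^sub>E j\<in>pl G - {i}. Strat G j)"

definition zeta :: "('i,'a) game \<Rightarrow> ('i \<Rightarrow> ('i,'a) strat) \<Rightarrow> ('i,'a) hist" where
  "zeta G s = outcome_std G (\<lambda>j. SOME \<sigma>. \<sigma> \<in> s j)"

definition reaches :: "('i,'a) game \<Rightarrow> ('i \<Rightarrow> ('i,'a) strat) \<Rightarrow> ('i,'a) iset \<Rightarrow> bool" where
  "reaches G s h \<longleftrightarrow> (\<exists>x\<in>h. prefix x (zeta G s))"

definition Si_h :: "('i,'a) game \<Rightarrow> 'i \<Rightarrow> ('i,'a) iset \<Rightarrow> ('i,'a) strat set" where
  "Si_h G i h = {si \<in> Strat G i. \<exists>sm\<in>Sminus G i. reaches G (sm(i := si)) h}"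

definition Sm_h :: "('i,'a) game \<Rightarrow> 'i \<Rightarrow> ('i,'a) iset \<Rightarrow> ('i \<Rightarrow> ('i,'a) strat) set" where
  "Sm_h G i h = {sm \<in> Sminus G i. \<exists>si\<in>Strat G i. reaches G (sm(i := si)) h}"

definition Hi_of :: "('i,'a) game \<Rightarrow> 'i \<Rightarrow> ('i,'a) strat \<Rightarrow> ('i,'a) iset set" where
  "Hi_of G i si = {h \<in> info G i. si \<in> Si_h G i h}"

definition wdom :: "('i,'a) game \<Rightarrow> 'i \<Rightarrow> ('i,'a) strat set \<Rightarrow> ('i \<Rightarrow> ('i,'a) strat) set
                    \<Rightarrow> ('i,'a) strat \<Rightarrow> ('i,'a) strat \<Rightarrow> bool" where
  "wdom G i Ps Pm si ti \<longleftrightarrow> si \<in> Ps \<and> ti \<in> Ps \<and>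
     (\<forall>sm\<in>Pm. pref G i (zeta G (sm(i := ti))) (zeta G (sm(i := si)))) \<and>
     (\<exists>sm\<in>Pm. spref G i (zeta G (sm(i := ti))) (zeta G (sm(i := si))))"

definition Bdom :: "('i,'a) game \<Rightarrow> 'i \<Rightarrow> ('i,'a) strat set \<Rightarrow> ('i \<Rightarrow> ('i,'a) strat) set
                    \<Rightarrow> ('i,'a) strat \<Rightarrow> bool" where
  "Bdom G i Ps Pm si \<longleftrightarrow> si \<in> Ps \<and>
     (\<forall>Q. Q \<noteq> {} \<longrightarrow> Q \<subseteq> Pm \<longrightarrow> (\<exists>ti\<in>Ps. wdom G i Ps Q si ti))"

definition cond_Bdom :: "('i,'a) game \<Rightarrow> 'i \<Rightarrow> ('i \<Rightarrow> ('i,'a) strat set) \<Rightarrow> ('i,'a) strat \<Rightarrow> bool" where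
  "cond_Bdom G i R si \<longleftrightarrow> si \<in> R i \<and>
     (\<exists>h\<in>Hi_of G i si.
        let Ri = R i \<inter> Si_h G i h;
            Rm = (\<Pi>\<^sub>E j\<in>pl G - {i}. R j) \<inter> Sm_h G i h
        in Ri \<times> Rm \<noteq> {} \<and> Bdom G i Ri Rm si)"

definition utils :: "('i,'a) game \<Rightarrow> 'i \<Rightarrow> (('i,'a) hist \<Rightarrow> real) set" where
  "utils G i = {u. \<forall>z\<in>Zs G. \<forall>z'\<in>Zs G. u z \<ge> u z' \<longleftrightarrow> pref G i z z'}"

definition cond_events :: "('i,'a) game \<Rightarrow> 'i \<Rightarrow> ('i \<Rightarrow> ('i,'a) strat) set set" where
  "cond_events G i = {Sm_h G i h | h. h \<in> info G i}"

definition cps :: "('i,'a) game \<Rightarrow> 'i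
     \<Rightarrow> (('i \<Rightarrow> ('i,'a) strat) set \<Rightarrow> ('i \<Rightarrow> ('i,'a) strat) \<Rightarrow> real) \<Rightarrow> bool" where
  "cps G i \<mu> \<longleftrightarrow>
     (\<forall>E\<in>cond_events G i. (\<forall>s\<in>Sminus G i. \<mu> E s \<ge> 0) \<and> sum (\<mu> E) (Sminus G i) = 1 \<and>
                          sum (\<mu> E) E = 1) \<and>
     (\<forall>E\<in>cond_events G i. \<forall>E'\<in>cond_events G i. \<forall>A. A \<subseteq> E' \<longrightarrow> E' \<subseteq> E \<longrightarrow>
          sum (\<mu> E) A = sum (\<mu> E') A * sum (\<mu> E) E')"

definition seq_rational :: "('i,'a) game \<Rightarrow> 'i \<Rightarrow> ('i,'a) strat \<Rightarrow> bool" where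
  "seq_rational G i s \<longleftrightarrow> (\<exists>u\<in>utils G i. \<exists>\<mu>. cps G i \<mu> \<and>
     (\<forall>h\<in>Hi_of G i s. \<forall>t\<in>Si_h G i h.
        (\<Sum>sm\<in>Sminus G i. u (zeta G (sm(i := s))) * \<mu> (Sm_h G i h) sm)
      \<ge> (\<Sum>sm\<in>Sminus G i. u (zeta G (sm(i := t))) * \<mu> (Sm_h G i h) sm)))"

end

theory Submission
  imports Defs
begin


locale wgame =
  fixes G :: "('i,'a) game"
  assumes wf: "wf_game G"
begin

lemmas W0 = wf[unfolded wf_game_def]
lemmas W1 = W0[THEN conjunct1]
lemmas W2 = W0[THEN conjunct2, THEN conjunct1]
lemmas W3 = W0[THEN conjunct2, THEN conjunct2, THEN conjunct1]
lemmas W4 = W0[THEN conjunct2, THEN conjunct2, THEN conjunct2, THEN conjunct1]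
lemmas W5 = W0[THEN conjunct2, THEN conjunct2, THEN conjunct2, THEN conjunct2, THEN conjunct1]
lemmas W6 = W0[THEN conjunct2, THEN conjunct2, THEN conjunct2, THEN conjunct2, THEN conjunct2, THEN conjunct1]
lemmas W7 = W0[THEN conjunct2, THEN conjunct2, THEN conjunct2, THEN conjunct2, THEN conjunct2, THEN conjunct2, THEN conjunct1]
lemmas W8 = W0[THEN conjunct2, THEN conjunct2, THEN conjunct2, THEN conjunct2, THEN conjunct2, THEN conjunct2, THEN conjunct2]
lemmas W = W1 W2 W3 W4 W5 W6 W7 W8

lemma fin_pl: "finite (pl G)" using W by blast
lemma fin_hist: "finite (hist G)" using W by blast
lemma nil_hist: "[] \<in> hist G" using W by blast
lemma pclosed: "x @ y \<in> hist G \<Longrightarrow> x \<in> hist G" using W(4) by blast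
lemma nt_acts: "nonterm G x \<Longrightarrow> j \<in> pl G \<Longrightarrow> acts G j x \<noteq> {}"
  using W(5) by blast
lemma nt_step: assumes "nonterm G x" shows "x @ [a] \<in> hist G \<longleftrightarrow> a \<in> (\<Pi>\<^sub>E j\<in>pl G. acts G j x)"
  using conjunct2[OF W(5)[rule_format, OF assms]] by simp
lemma info_ne: "j \<in> pl G \<Longrightarrow> h \<in> info G j \<Longrightarrow> h \<noteq> {}"
  using W(6)[rule_format, THEN conjunct1] by blast
lemma info_Un: "j \<in> pl G \<Longrightarrow> \<Union>(info G j) = {x. active G j x}"
  using W(6)[rule_format, THEN conjunct2, THEN conjunct1] by blast
lemma info_disj: "j \<in> pl G \<Longrightarrow> h \<in> info G j \<Longrightarrow> h' \<in> info G j \<Longrightarrow> h \<noteq> h' \<Longrightarrow> h \<inter> h' = {}"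
  using W(6)[rule_format, THEN conjunct2, THEN conjunct2, THEN conjunct1] by blast
lemma info_acts: "j \<in> pl G \<Longrightarrow> h \<in> info G j \<Longrightarrow> x \<in> h \<Longrightarrow> y \<in> h \<Longrightarrow> acts G j x = acts G j y"
  using W(6)[rule_format, THEN conjunct2, THEN conjunct2, THEN conjunct2] by blast
lemma precall: "j \<in> pl G \<Longrightarrow> h \<in> info G j \<Longrightarrow> x \<in> h \<Longrightarrow> y \<in> h \<Longrightarrow> experience G j x = experience G j y"
  using W(7) unfolding perfect_recall_def by blast
lemma pref_total: "j \<in> pl G \<Longrightarrow> z \<in> Zs G \<Longrightarrow> z' \<in> Zs G \<Longrightarrow> pref G j z z' \<or> pref G j z' z"
  using W(8)[rule_format, THEN conjunct1] by blast
lemma pref_trans: "j \<in> pl G \<Longrightarrow> z \<in> Zs G \<Longrightarrow> z' \<in> Zs G \<Longrightarrow> z'' \<in> Zs G \<Longrightarrow> pref G j z z' \<Longrightarrow> pref G j z' z'' \<Longrightarrow> pref G j z z''"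
  using W(8)[rule_format, THEN conjunct2] by blast

lemma info_active: "j \<in> pl G \<Longrightarrow> h \<in> info G j \<Longrightarrow> x \<in> h \<Longrightarrow> active G j x"
  using info_Un by blast

lemma infoset_eq: assumes "j \<in> pl G" "h \<in> info G j" "x \<in> h" shows "infoset G j x = h"
  unfolding infoset_def
proof (rule the_equality)
  show "h \<in> info G j \<and> x \<in> h" using assms by blast
  fix h' assume "h' \<in> info G j \<and> x \<in> h'"
  then show "h' = h" using info_disj[OF assms(1) assms(2)] assms by blast
qed

lemma infoset_in: assumes "j \<in> pl G" "active G j x"
  shows "infoset G j x \<in> info G j" "x \<in> infoset G j x"
proof -
  obtain h where "h \<in> info G j" "x \<in> h" using info_Un[OF assms(1)] assms(2) by blast
  then show "infoset G j x \<in> info G j" "x \<in> infoset G j x" using infoset_eq assms(1) by auto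
qed

lemma actsI_eq: assumes "j \<in> pl G" "h \<in> info G j" "x \<in> h" shows "actsI G j h = acts G j x"
  unfolding actsI_def using info_acts[OF assms(1,2) _ assms(3)] someI[of "\<lambda>y. y \<in> h" x] assms(3) by blast

lemma active_nonterm: "active G j x \<Longrightarrow> nonterm G x" unfolding active_def by blast

lemma inactive_the: assumes "j \<in> pl G" "nonterm G x" "\<not> active G j x" "a \<in> acts G j x"
  shows "(THE a. a \<in> acts G j x) = a"
proof -
  have n: "\<not> (\<exists>a\<in>acts G j x. \<exists>b\<in>acts G j x. a \<noteq> b)"
    using assms(1,2,3) unfolding active_def by simp
  show ?thesis
  proof (rule the_equality)
    show "a \<in> acts G j x" by fact
    fix b assume "b \<in> acts G j x" then show "b = a" using n assms(4) by blast
  qed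
qed

lemma hist_step:
  assumes "x \<in> hist G" "k < length x"
  shows "take k x \<in> hist G" "nonterm G (take k x)" "x ! k \<in> (\<Pi>\<^sub>E j\<in>pl G. acts G j (take k x))"
proof -
  have e: "take (Suc k) x = take k x @ [x ! k]" using assms(2) by (simp add: take_Suc_conv_app_nth)
  have "take (Suc k) x \<in> hist G" using pclosed[of "take (Suc k) x" "drop (Suc k) x"] assms(1) by simp
  then have h1: "take k x @ [x ! k] \<in> hist G" using e by simp
  then show t: "take k x \<in> hist G" using pclosed by blast
  show nt: "nonterm G (take k x)" using h1 t unfolding nonterm_def terminal_def by blast
  show "x ! k \<in> (\<Pi>\<^sub>E j\<in>pl G. acts G j (take k x))" using nt_step[OF nt] h1 by blast
qed

definition std_prof :: "('i \<Rightarrow> ('i,'a) stdstrat) \<Rightarrow> bool" where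
  "std_prof \<sigma> \<longleftrightarrow> (\<forall>j\<in>pl G. \<sigma> j \<in> std_strat G j)"

lemma move_in: assumes "std_prof \<sigma>" "nonterm G x"
  shows "move G \<sigma> x \<in> (\<Pi>\<^sub>E j\<in>pl G. acts G j x)"
proof -
  have "move G \<sigma> x j \<in> acts G j x" if j: "j \<in> pl G" for j
  proof (cases "active G j x")
    case True
    have "\<sigma> j (infoset G j x) \<in> actsI G j (infoset G j x)"
      using assms(1) j infoset_in[OF j True] unfolding std_prof_def std_strat_def by blast
    then show ?thesis using True j actsI_eq[OF j infoset_in[OF j True]] unfolding move_def by simp
  next
    case False
    obtain a where a: "a \<in> acts G j x" using nt_acts[OF assms(2) j] by blast
    show ?thesis using False j inactive_the[OF j assms(2) False a] a unfolding move_def by simp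
  qed
  then show ?thesis unfolding move_def PiE_def extensional_def by auto
qed

lemma move_cong: "(\<And>j. j \<in> pl G \<Longrightarrow> \<sigma> j = \<tau> j) \<Longrightarrow> move G \<sigma> x = move G \<tau> x"
  unfolding move_def by auto

lemma on_path_cong: "(\<And>j. j \<in> pl G \<Longrightarrow> \<sigma> j = \<tau> j) \<Longrightarrow> on_path G \<sigma> x = on_path G \<tau> x"
  unfolding on_path_def using move_cong by metis

lemma outcome_cong: "(\<And>j. j \<in> pl G \<Longrightarrow> \<sigma> j = \<tau> j) \<Longrightarrow> outcome_std G \<sigma> = outcome_std G \<tau>"
  unfolding outcome_std_def using on_path_cong by metis

lemma on_path_nil: "on_path G \<sigma> []" unfolding on_path_def using nil_hist by simp

lemma on_path_snoc: assumes "std_prof \<sigma>" "on_path G \<sigma> x" "nonterm G x"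
  shows "on_path G \<sigma> (x @ [move G \<sigma> x])"
proof -
  have "x @ [move G \<sigma> x] \<in> hist G" using nt_step[OF assms(3)] move_in[OF assms(1,3)] by blast
  moreover have "(x @ [move G \<sigma> x]) ! k = move G \<sigma> (take k (x @ [move G \<sigma> x]))"
    if "k < length (x @ [move G \<sigma> x])" for k
  proof (cases "k < length x")
    case True
    then show ?thesis using assms(2) unfolding on_path_def by (simp add: nth_append)
  next
    case False
    then have "k = length x" using that by simp
    then show ?thesis by simp
  qed
  ultimately show ?thesis unfolding on_path_def by blast
qed

lemma hist_len_bound: obtains N where "\<And>x. x \<in> hist G \<Longrightarrow> length x \<le> N"
proof -
  have f: "finite (length ` hist G)" using fin_hist by simp
  show ?thesis
  proof (rule that)
    fix x assume "x \<in> hist G"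
    then show "length x \<le> Max (length ` hist G)" using f by (intro Max_ge) auto
  qed
qed

lemma path_ext: assumes "std_prof \<sigma>" "on_path G \<sigma> x"
  shows "\<exists>z. terminal G z \<and> on_path G \<sigma> z \<and> prefix x z"
proof -
  obtain N where N: "\<And>x. x \<in> hist G \<Longrightarrow> length x \<le> N" using hist_len_bound by blast
  have "\<forall>x. N - length x = n \<longrightarrow> on_path G \<sigma> x \<longrightarrow> (\<exists>z. terminal G z \<and> on_path G \<sigma> z \<and> prefix x z)" for n
  proof (induction n rule: less_induct)
    case (less n)
    show ?case
    proof (intro allI impI)
      fix x assume n: "N - length x = n" and op: "on_path G \<sigma> x"
      have xh: "x \<in> hist G" using op unfolding on_path_def by blast
      show "\<exists>z. terminal G z \<and> on_path G \<sigma> z \<and> prefix x z"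
      proof (cases "terminal G x")
        case True then show ?thesis using op by blast
      next
        case False
        then have nt: "nonterm G x" using xh unfolding nonterm_def by blast
        let ?x = "x @ [move G \<sigma> x]"
        have op': "on_path G \<sigma> ?x" using on_path_snoc[OF assms(1) op nt] .
        have "?x \<in> hist G" using op' unfolding on_path_def by blast
        then have "length ?x \<le> N" using N by blast
        then have "N - length ?x < n" using n by simp
        then obtain z where "terminal G z" "on_path G \<sigma> z" "prefix ?x z" using less op' by blast
        then show ?thesis by (meson prefix_order.dual_order.trans prefixI)
      qed
    qed
  qed
  then show ?thesis using assms(2) by blast
qed

lemma path_take: assumes "on_path G \<sigma> z1" "on_path G \<sigma> z2" "k \<le> length z1" "k \<le> length z2"
  shows "take k z1 = take k z2"
  using assms(3,4)
proof (induction k)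
  case 0 then show ?case by simp
next
  case (Suc k)
  have "take (Suc k) z1 = take k z1 @ [z1 ! k]" using Suc.prems by (simp add: take_Suc_conv_app_nth)
  moreover have "take (Suc k) z2 = take k z2 @ [z2 ! k]" using Suc.prems by (simp add: take_Suc_conv_app_nth)
  moreover have "z1 ! k = move G \<sigma> (take k z1)" using assms(1) Suc.prems unfolding on_path_def by simp
  moreover have "z2 ! k = move G \<sigma> (take k z2)" using assms(2) Suc.prems unfolding on_path_def by simp
  ultimately show ?case using Suc by simp
qed

lemma path_comparable: assumes "on_path G \<sigma> z1" "on_path G \<sigma> z2"
  shows "prefix z1 z2 \<or> prefix z2 z1"
proof (cases "length z1 \<le> length z2")
  case True
  then have "take (length z1) z2 = z1" using path_take[OF assms, of "length z1"] by simp
  then show ?thesis by (metis take_is_prefix)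
next
  case False
  then have "take (length z2) z1 = z2" using path_take[OF assms, of "length z2"] by simp
  then show ?thesis by (metis take_is_prefix)
qed

lemma terminal_prefix_eq: assumes "terminal G z" "z' \<in> hist G" "prefix z z'" shows "z = z'"
proof (rule ccontr)
  assume "z \<noteq> z'"
  then obtain a w where "z' = z @ a # w" using assms(3) by (metis prefixE self_append_conv neq_Nil_conv)
  then have "z @ [a] \<in> hist G" using pclosed[of "z @ [a]" w] assms(2) by simp
  then show False using assms(1) unfolding terminal_def by blast
qed

lemma on_path_hist: "on_path G \<sigma> x \<Longrightarrow> x \<in> hist G" unfolding on_path_def by blast

lemma outcome_unique: assumes "terminal G z" "on_path G \<sigma> z" "terminal G z'" "on_path G \<sigma> z'"
  shows "z = z'"
  using path_comparable[OF assms(2,4)] terminal_prefix_eq assms on_path_hist by metis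

lemma outcome_eq: assumes "std_prof \<sigma>" "terminal G z" "on_path G \<sigma> z"
  shows "outcome_std G \<sigma> = z"
  unfolding outcome_std_def
  using assms outcome_unique by (intro the_equality) auto

lemma outcome_props: assumes "std_prof \<sigma>"
  shows "terminal G (outcome_std G \<sigma>)" "on_path G \<sigma> (outcome_std G \<sigma>)"
proof -
  obtain z where "terminal G z" "on_path G \<sigma> z" using path_ext[OF assms on_path_nil] by blast
  then show "terminal G (outcome_std G \<sigma>)" "on_path G \<sigma> (outcome_std G \<sigma>)"
    using outcome_eq[OF assms] by auto
qed

lemma on_path_prefix: assumes "on_path G \<sigma> z" "prefix x z" shows "on_path G \<sigma> x"
proof -
  obtain w where w: "z = x @ w" using assms(2) prefixE by blast
  have "x \<in> hist G" using pclosed assms(1) w on_path_hist by blast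
  moreover have "x ! k = move G \<sigma> (take k x)" if "k < length x" for k
  proof -
    have "z ! k = move G \<sigma> (take k z)" using assms(1) that w unfolding on_path_def by auto
    then show ?thesis using that w by (simp add: nth_append)
  qed
  ultimately show ?thesis unfolding on_path_def by blast
qed

lemma prefix_outcome_iff: assumes "std_prof \<sigma>"
  shows "prefix x (outcome_std G \<sigma>) \<longleftrightarrow> on_path G \<sigma> x"
proof
  assume "prefix x (outcome_std G \<sigma>)"
  then show "on_path G \<sigma> x" using on_path_prefix outcome_props[OF assms] by blast
next
  assume a: "on_path G \<sigma> x"
  show "prefix x (outcome_std G \<sigma>)"
    using path_comparable[OF a outcome_props(2)[OF assms]] terminal_prefix_eq[OF outcome_props(1)[OF assms]]
      on_path_hist[OF a] by metis
qed

end



context wgame begin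

definition Rel :: "'i \<Rightarrow> (('i,'a) stdstrat \<times> ('i,'a) stdstrat) set" where
  "Rel j = {(\<sigma>, \<tau>). \<sigma> \<in> std_strat G j \<and> \<tau> \<in> std_strat G j \<and> beq G j \<sigma> \<tau>}"

lemma Strat_Rel: "Strat G j = std_strat G j // Rel j"
  unfolding Strat_def Rel_def by simp

lemma equiv_Rel: "equiv (std_strat G j) (Rel j)"
proof (rule equivI)
  show "refl_on (std_strat G j) (Rel j)" unfolding refl_on_def Rel_def beq_def by auto
  show "sym (Rel j)" unfolding sym_def Rel_def beq_def by auto
  show "trans (Rel j)" unfolding trans_def Rel_def beq_def by (auto; metis)
  show "Rel j \<subseteq> std_strat G j \<times> std_strat G j" unfolding Rel_def by auto
qed

lemma strat_ne: "p \<in> Strat G j \<Longrightarrow> p \<noteq> {}"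
  using in_quotient_imp_non_empty[OF equiv_Rel] Strat_Rel by metis
lemma strat_sub: "p \<in> Strat G j \<Longrightarrow> p \<subseteq> std_strat G j"
  using in_quotient_imp_subset[OF equiv_Rel] Strat_Rel by metis
lemma strat_beq: "p \<in> Strat G j \<Longrightarrow> \<sigma> \<in> p \<Longrightarrow> \<tau> \<in> p \<Longrightarrow> beq G j \<sigma> \<tau>"
  using in_quotient_imp_in_rel[OF equiv_Rel, of p j \<sigma> \<tau>] Strat_Rel unfolding Rel_def by auto
lemma class_Strat: "\<sigma> \<in> std_strat G j \<Longrightarrow> Rel j `` {\<sigma>} \<in> Strat G j"
  using quotientI Strat_Rel by metis
lemma class_self: "\<sigma> \<in> std_strat G j \<Longrightarrow> \<sigma> \<in> Rel j `` {\<sigma>}"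
  using equiv_class_self[OF equiv_Rel] by metis

definition prof :: "('i \<Rightarrow> ('i,'a) strat) \<Rightarrow> bool" where
  "prof p \<longleftrightarrow> (\<forall>j\<in>pl G. p j \<in> Strat G j)"

definition rep :: "('i \<Rightarrow> ('i,'a) strat) \<Rightarrow> 'i \<Rightarrow> ('i,'a) stdstrat" where
  "rep p = (\<lambda>j. SOME \<sigma>. \<sigma> \<in> p j)"

lemma zeta_rep: "zeta G p = outcome_std G (rep p)" unfolding zeta_def rep_def by simp

lemma rep_in: "p \<in> Strat G j \<Longrightarrow> (SOME \<sigma>. \<sigma> \<in> p) \<in> p"
proof -
  assume "p \<in> Strat G j"
  then obtain \<sigma> where "\<sigma> \<in> p" using strat_ne by blast
  then show ?thesis by (rule someI[of "\<lambda>\<sigma>. \<sigma> \<in> p"])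
qed

lemma rep_props: assumes "prof p" shows "std_prof (rep p)" "\<And>j. j \<in> pl G \<Longrightarrow> rep p j \<in> p j"
proof -
  show r: "\<And>j. j \<in> pl G \<Longrightarrow> rep p j \<in> p j" using assms rep_in unfolding prof_def rep_def by blast
  show "std_prof (rep p)" unfolding std_prof_def using r strat_sub assms unfolding prof_def by blast
qed

lemma allows_path: assumes "std_prof \<tau>" "j \<in> pl G" "h \<in> info G j" "x \<in> h" "on_path G \<tau> x"
  shows "allows G j (\<tau> j) h"
  unfolding allows_def using assms prefix_outcome_iff[OF assms(1)] unfolding std_prof_def by blast

lemma outcome_rep: assumes "prof p" "std_prof \<sigma>" "\<And>j. j \<in> pl G \<Longrightarrow> \<sigma> j \<in> p j"
  shows "outcome_std G \<sigma> = zeta G p"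
proof -
  let ?\<tau> = "rep p"
  have st: "std_prof ?\<tau>" using rep_props[OF assms(1)] by blast
  let ?z = "outcome_std G ?\<tau>"
  have t: "terminal G ?z" and op: "on_path G ?\<tau> ?z" using outcome_props[OF st] by auto
  have "move G \<sigma> (take k ?z) = move G ?\<tau> (take k ?z)" if k: "k < length ?z" for k
  proof -
    let ?x = "take k ?z"
    have opx: "on_path G ?\<tau> ?x" using on_path_prefix[OF op] by (simp add: take_is_prefix)
    have "\<sigma> j (infoset G j ?x) = ?\<tau> j (infoset G j ?x)" if j: "j \<in> pl G" and a: "active G j ?x" for j
    proof -
      have hi: "infoset G j ?x \<in> info G j" "?x \<in> infoset G j ?x" using infoset_in[OF j a] by auto
      have al: "allows G j (?\<tau> j) (infoset G j ?x)" using allows_path[OF st j hi opx] .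
      have "beq G j (\<sigma> j) (?\<tau> j)" using strat_beq assms(1,3) rep_props(2)[OF assms(1)] j unfolding prof_def by blast
      then show ?thesis using al hi unfolding beq_def by blast
    qed
    then show ?thesis unfolding move_def by auto
  qed
  then have "on_path G \<sigma> ?z" using op unfolding on_path_def by auto
  then have "outcome_std G \<sigma> = ?z" using outcome_eq[OF assms(2) t] by blast
  then show ?thesis using zeta_rep by simp
qed

lemma zeta_props: assumes "prof p"
  shows "terminal G (zeta G p)" "on_path G (rep p) (zeta G p)" "zeta G p \<in> Zs G"
  using outcome_props[OF rep_props(1)[OF assms]] zeta_rep unfolding Zs_def by auto

lemma reaches_iff: assumes "prof p" "std_prof \<sigma>" "\<And>j. j \<in> pl G \<Longrightarrow> \<sigma> j \<in> p j"
  shows "reaches G p h \<longleftrightarrow> (\<exists>x\<in>h. on_path G \<sigma> x)"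
  unfolding reaches_def using outcome_rep[OF assms] prefix_outcome_iff[OF assms(2)] by auto

lemma reaches_rep: assumes "prof p"
  shows "reaches G p h \<longleftrightarrow> (\<exists>x\<in>h. on_path G (rep p) x)"
  using reaches_iff[OF assms rep_props[OF assms]] by blast

lemma prof_upd: assumes "sm \<in> Sminus G i" "s \<in> Strat G i" shows "prof (sm(i := s))"
  using assms unfolding prof_def Sminus_def PiE_def by auto

lemma rep_upd: "rep (sm(i := s)) = (rep sm)(i := SOME \<sigma>. \<sigma> \<in> s)"
  unfolding rep_def by auto

lemma acts_finite: assumes "nonterm G x" "j \<in> pl G" shows "finite (acts G j x)"
proof -
  have f: "finite {a. x @ [a] \<in> hist G}"
    using finite_vimageI[OF fin_hist, of "\<lambda>a. x @ [a]"] by (simp add: inj_on_def vimage_def)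
  have "acts G j x \<subseteq> (\<lambda>a. a j) ` {a. x @ [a] \<in> hist G}"
  proof
    fix b assume b: "b \<in> acts G j x"
    let ?a = "\<lambda>k. if k \<in> pl G then (if k = j then b else SOME c. c \<in> acts G k x) else undefined"
    have "?a \<in> (\<Pi>\<^sub>E k\<in>pl G. acts G k x)"
    proof -
      have "(SOME c. c \<in> acts G k x) \<in> acts G k x" if "k \<in> pl G" for k
        using nt_acts[OF assms(1) that] some_in_eq by blast
      then show ?thesis using b by (auto simp: PiE_def extensional_def)
    qed
    then have "x @ [?a] \<in> hist G" using nt_step[OF assms(1)] by blast
    then show "b \<in> (\<lambda>a. a j) ` {a. x @ [a] \<in> hist G}" using assms(2) by (intro image_eqI[of _ _ ?a]) auto
  qed
  then show ?thesis using f finite_subset by blast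
qed

lemma info_finite: assumes "j \<in> pl G" shows "finite (info G j)"
proof -
  have "info G j \<subseteq> Pow (hist G)" using info_Un[OF assms] unfolding active_def nonterm_def by blast
  then show ?thesis using fin_hist finite_subset by blast
qed

lemma std_strat_PiE: "std_strat G j = (\<Pi>\<^sub>E h\<in>info G j. actsI G j h)"
  unfolding std_strat_def PiE_def Pi_def extensional_def by auto

lemma actsI_finite: assumes "j \<in> pl G" "h \<in> info G j" shows "finite (actsI G j h)"
proof -
  obtain x where x: "x \<in> h" using info_ne[OF assms] by blast
  show ?thesis using actsI_eq[OF assms x] acts_finite[OF active_nonterm[OF info_active[OF assms x]] assms(1)] by simp
qed

lemma std_finite: "j \<in> pl G \<Longrightarrow> finite (std_strat G j)"
  unfolding std_strat_PiE using info_finite actsI_finite by (intro finite_PiE) auto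

lemma Strat_finite: "j \<in> pl G \<Longrightarrow> finite (Strat G j)"
  unfolding Strat_Rel quotient_def using std_finite by auto

lemma Sminus_finite: "finite (Sminus G i)"
  unfolding Sminus_def using Strat_finite fin_pl by (intro finite_PiE) auto

lemma Zs_finite: "finite (Zs G)"
  using fin_hist unfolding Zs_def terminal_def by (auto intro: finite_subset)

end



context wgame begin

definition expf :: "'i \<Rightarrow> ('i,'a) hist \<Rightarrow> nat \<Rightarrow> (('i,'a) iset \<times> 'a) list" where
  "expf j y k = (if active G j (take k y) then [(infoset G j (take k y), (y ! k) j)] else [])"

lemma experience_expf: "experience G j x = concat (map (expf j x) [0..<length x])"
  unfolding experience_def expf_def by simp

lemma exp_mem: "(g,a) \<in> set (experience G j x) \<longleftrightarrow>
   (\<exists>k<length x. active G j (take k x) \<and> g = infoset G j (take k x) \<and> a = (x ! k) j)"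
  unfolding experience_expf expf_def by (auto split: if_splits)

lemma exp_prefix: assumes "y = x @ w"
  shows "experience G j y = experience G j x @ concat (map (expf j y) [length x..<length y])"
proof -
  have "[0..<length y] = [0..<length x] @ [length x..<length y]"
    using assms by (simp add: upt_add_eq_append[of 0 "length x"])
  moreover have "map (expf j y) [0..<length x] = map (expf j x) [0..<length x]"
    using assms by (auto simp: expf_def nth_append)
  ultimately show ?thesis unfolding experience_expf by (simp only: map_append concat_append)
qed

lemma exp_strict: assumes "strict_prefix x y" "active G j x"
  shows "length (experience G j x) < length (experience G j y)"
proof -
  obtain w where w: "y = x @ w" "w \<noteq> []" using assms(1) by (metis prefixE strict_prefix_def self_append_conv)
  have "[length x..<length y] = length x # [Suc (length x)..<length y]"
    using w by (simp add: upt_rec)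
  moreover have "expf j y (length x) = [(infoset G j x, (y ! length x) j)]"
    using w assms(2) by (simp add: expf_def)
  ultimately show ?thesis using exp_prefix[OF w(1)] by simp
qed

lemma no_absent: assumes "j \<in> pl G" "g \<in> info G j" "x \<in> g" "y \<in> g" "strict_prefix x y"
  shows False
proof -
  have "length (experience G j x) < length (experience G j y)"
    using exp_strict[OF assms(5) info_active[OF assms(1,2,3)]] .
  then show False using precall[OF assms(1-4)] by simp
qed

lemma prec_all: assumes "j \<in> pl G" "g \<in> info G j" "h \<in> info G j" "x \<in> g" "x' \<in> h"
  "strict_prefix x x'" "y' \<in> h"
  shows "\<exists>y\<in>g. strict_prefix y y'"
proof -
  obtain w where w: "x' = x @ w" "w \<noteq> []" using assms(6) by (metis prefixE strict_prefix_def self_append_conv)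
  have k: "length x < length x'" using w by simp
  have "take (length x) x' = x" using w by simp
  then have "(g, (x' ! length x) j) \<in> set (experience G j x')"
    unfolding exp_mem using k info_active[OF assms(1,2,4)] infoset_eq[OF assms(1,2,4)] by metis
  then have "(g, (x' ! length x) j) \<in> set (experience G j y')" using precall[OF assms(1,3,5,7)] by simp
  then obtain k where k: "k < length y'" "active G j (take k y')" "g = infoset G j (take k y')"
    unfolding exp_mem by blast
  have "take k y' \<in> g" using infoset_in[OF assms(1) k(2)] k(3) by simp
  moreover have "strict_prefix (take k y') y'" using k(1)
    by (metis prefix_order.le_neq_trans take_is_prefix length_take min_absorb2 nat_less_le)
  ultimately show ?thesis by blast
qed

definition prec :: "'i \<Rightarrow> ('i,'a) iset \<Rightarrow> ('i,'a) iset \<Rightarrow> bool" where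
  "prec j g h \<longleftrightarrow> g \<in> info G j \<and> h \<in> info G j \<and> (\<exists>x\<in>g. \<exists>y\<in>h. strict_prefix x y)"

lemma prec_irrefl: "j \<in> pl G \<Longrightarrow> \<not> prec j g g"
  unfolding prec_def using no_absent by blast

lemma prec_D: "j \<in> pl G \<Longrightarrow> prec j g h \<Longrightarrow> y \<in> h \<Longrightarrow> \<exists>x\<in>g. strict_prefix x y"
  unfolding prec_def using prec_all by blast

lemma prec_trans: assumes "j \<in> pl G" "prec j g h" "prec j h k" shows "prec j g k"
proof -
  obtain y z where yz: "y \<in> h" "z \<in> k" "strict_prefix y z" using assms(3) unfolding prec_def by blast
  obtain x where "x \<in> g" "strict_prefix x y" using prec_D[OF assms(1,2) yz(1)] by blast
  then show ?thesis using yz assms unfolding prec_def by (meson prefix_order.less_trans)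
qed

definition depth :: "'i \<Rightarrow> ('i,'a) iset \<Rightarrow> nat" where
  "depth j g = length (experience G j (SOME x. x \<in> g))"

lemma depth_eq: assumes "j \<in> pl G" "g \<in> info G j" "x \<in> g" shows "depth j g = length (experience G j x)"
proof -
  have "(SOME x. x \<in> g) \<in> g" using assms(3) by (rule someI)
  then show ?thesis unfolding depth_def using precall[OF assms(1,2)] assms(3) by metis
qed

lemma prec_depth: assumes "j \<in> pl G" "prec j g h" shows "depth j g < depth j h"
proof -
  obtain x y where xy: "x \<in> g" "y \<in> h" "strict_prefix x y" "g \<in> info G j" "h \<in> info G j"
    using assms(2) unfolding prec_def by blast
  show ?thesis using depth_eq[OF assms(1) xy(4,1)] depth_eq[OF assms(1) xy(5,2)]
      exp_strict[OF xy(3) info_active[OF assms(1) xy(4,1)]] by simp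
qed

lemma comparable: assumes "j \<in> pl G" "g \<in> info G j" "h \<in> info G j" "x \<in> g" "y \<in> h"
  "prefix x z" "prefix y z"
  shows "g = h \<or> prec j g h \<or> prec j h g"
proof -
  have "prefix x y \<or> prefix y x" using assms(6,7) prefix_same_cases by blast
  moreover
  { assume "x = y" then have "g = h" using info_disj[OF assms(1,2,3)] assms(4,5) by blast }
  ultimately show ?thesis using assms unfolding prec_def
    by (metis prefix_order.le_neq_trans)
qed

section \<open>Product structure\<close>

lemma product_path: assumes "std_prof \<sigma>1" "std_prof \<sigma>2" "i \<in> pl G" "h \<in> info G i"
  "x \<in> h" "y \<in> h" "on_path G \<sigma>1 x" "on_path G \<sigma>2 y"
  shows "on_path G (\<sigma>2(i := \<sigma>1 i)) y"
proof -
  have "y ! k = move G (\<sigma>2(i := \<sigma>1 i)) (take k y)" if k: "k < length y" for k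
  proof -
    have yk: "y ! k = move G \<sigma>2 (take k y)" using assms(8) k unfolding on_path_def by blast
    have "move G \<sigma>2 (take k y) i = \<sigma>1 i (infoset G i (take k y))" if a: "active G i (take k y)"
    proof -
      have "(infoset G i (take k y), (y ! k) i) \<in> set (experience G i y)"
        unfolding exp_mem using k a by blast
      then have "(infoset G i (take k y), (y ! k) i) \<in> set (experience G i x)"
        using precall[OF assms(3,4,5,6)] by simp
      then obtain k' where k': "k' < length x" "active G i (take k' x)"
        "infoset G i (take k y) = infoset G i (take k' x)" "(y ! k) i = (x ! k') i"
        unfolding exp_mem by blast
      have "x ! k' = move G \<sigma>1 (take k' x)" using assms(7) k'(1) unfolding on_path_def by blast
      then have "(x ! k') i = \<sigma>1 i (infoset G i (take k' x))" using k'(2) assms(3) unfolding move_def by simp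
      then show ?thesis using yk k' by simp
    qed
    then have "move G \<sigma>2 (take k y) = move G (\<sigma>2(i := \<sigma>1 i)) (take k y)"
      unfolding move_def by (auto intro!: ext)
    then show ?thesis using yk by simp
  qed
  then show ?thesis using assms(8) unfolding on_path_def by blast
qed

section \<open>Reachability of every history\<close>

lemma reach_hist: assumes "x \<in> hist G" shows "\<exists>\<sigma>. std_prof \<sigma> \<and> on_path G \<sigma> x"
proof -
  define P where "P j g k \<longleftrightarrow> k < length x \<and> active G j (take k x) \<and> infoset G j (take k x) = g" for j g k
  define \<sigma> where "\<sigma> j g = (if g \<in> info G j then (if \<exists>k. P j g k then (x ! (SOME k. P j g k)) j
      else SOME a. a \<in> actsI G j g) else undefined)" for j g
  have uniq: "k = k'" if j: "j \<in> pl G" and "P j g k" "P j g k'" for j g k k'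
  proof (rule ccontr)
    assume ne: "k \<noteq> k'"
    have i1: "take k x \<in> g" "take k' x \<in> g" "g \<in> info G j"
      using that infoset_in[OF j] unfolding P_def by auto
    show False
    proof (cases "k < k'")
      case True
      then have "strict_prefix (take k x) (take k' x)" using that unfolding P_def
        by (metis length_take min.absorb4 nat_less_le prefix_order.le_neq_trans take_is_prefix take_take min.absorb1 less_imp_le_nat)
      then show False using no_absent[OF j i1(3) i1(1,2)] by blast
    next
      case False
      then have "k' < k" using ne by simp
      then have "strict_prefix (take k' x) (take k x)" using that unfolding P_def
        by (metis length_take min.absorb4 nat_less_le prefix_order.le_neq_trans take_is_prefix take_take min.absorb1 less_imp_le_nat)
      then show False using no_absent[OF j i1(3) i1(2,1)] by blast
    qed
  qed
  have sp: "std_prof \<sigma>"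
    unfolding std_prof_def std_strat_def mem_Collect_eq
  proof (intro ballI conjI allI impI)
    fix j g assume j: "j \<in> pl G" and g: "g \<in> info G j"
    show "\<sigma> j g \<in> actsI G j g"
    proof (cases "\<exists>k. P j g k")
      case True
      then have Pk: "P j g (SOME k. P j g k)" by (rule someI_ex)
      let ?k = "SOME k. P j g k"
      have "take ?k x \<in> g" using Pk infoset_in[OF j] unfolding P_def by auto
      then have "actsI G j g = acts G j (take ?k x)" using actsI_eq[OF j g] by blast
      moreover have "x ! ?k \<in> (\<Pi>\<^sub>E j\<in>pl G. acts G j (take ?k x))" using hist_step(3)[OF assms] Pk unfolding P_def by blast
      ultimately show ?thesis using True g j unfolding \<sigma>_def by auto
    next
      case False
      obtain y where y: "y \<in> g" using info_ne[OF j g] by blast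
      have "actsI G j g \<noteq> {}" using actsI_eq[OF j g y] nt_acts[OF active_nonterm[OF info_active[OF j g y]] j] by simp
      then have "(SOME a. a \<in> actsI G j g) \<in> actsI G j g" by (simp add: some_in_eq)
      moreover have "\<sigma> j g = (SOME a. a \<in> actsI G j g)" unfolding \<sigma>_def by (simp only: g False if_True if_False)
      ultimately show ?thesis by simp
    qed
  next
    fix j g assume "g \<notin> info G j" then show "\<sigma> j g = undefined" unfolding \<sigma>_def by simp
  qed
  have "x ! k = move G \<sigma> (take k x)" if k: "k < length x" for k
  proof -
    have xk: "x ! k \<in> (\<Pi>\<^sub>E j\<in>pl G. acts G j (take k x))" using hist_step(3)[OF assms k] .
    have nt: "nonterm G (take k x)" using hist_step(2)[OF assms k] .
    show ?thesis
    proof (rule ext)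
      fix j
      show "(x ! k) j = move G \<sigma> (take k x) j"
      proof (cases "j \<in> pl G")
        case False then show ?thesis using xk unfolding move_def PiE_def extensional_def by auto
      next
        case j: True
        show ?thesis
        proof (cases "active G j (take k x)")
          case a: True
          let ?g = "infoset G j (take k x)"
          have g: "?g \<in> info G j" using infoset_in[OF j a] by blast
          have Pk: "P j ?g k" unfolding P_def using k a by simp
          then have "(SOME k. P j ?g k) = k" using uniq[OF j] someI[of "P j ?g" k] by blast
          then have "\<sigma> j ?g = (x ! k) j" using Pk g unfolding \<sigma>_def by auto
          then show ?thesis using j a unfolding move_def by simp
        next
          case na: False
          have "(x ! k) j \<in> acts G j (take k x)" using xk j by auto
          then show ?thesis using inactive_the[OF j nt na] j na unfolding move_def by simp
        qed
      qed
    qed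
  qed
  then show ?thesis using sp assms unfolding on_path_def by blast
qed

end



context wgame begin

lemma reaches_upd_rep: assumes "sm \<in> Sminus G i" "s \<in> Strat G i"
  shows "reaches G (sm(i := s)) h \<longleftrightarrow> (\<exists>x\<in>h. on_path G ((rep sm)(i := SOME \<sigma>. \<sigma> \<in> s)) x)"
  using reaches_rep[OF prof_upd[OF assms]] rep_upd by metis

lemma zeta_upd_rep: "zeta G (sm(i := s)) = outcome_std G ((rep sm)(i := SOME \<sigma>. \<sigma> \<in> s))"
  using zeta_rep rep_upd by metis

lemma std_prof_upd: assumes "sm \<in> Sminus G i" "s \<in> Strat G i"
  shows "std_prof ((rep sm)(i := SOME \<sigma>. \<sigma> \<in> s))"
  using rep_props(1)[OF prof_upd[OF assms]] rep_upd by metis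

lemma prod_reach: assumes i: "i \<in> pl G" and h: "h \<in> info G i"
  and sm: "sm1 \<in> Sminus G i" "sm2 \<in> Sminus G i" and s: "s1 \<in> Strat G i" "s2 \<in> Strat G i"
  and r1: "reaches G (sm1(i := s1)) h" and r2: "reaches G (sm2(i := s2)) h"
  shows "reaches G (sm2(i := s1)) h"
proof -
  let ?\<sigma>1 = "(rep sm1)(i := SOME \<sigma>. \<sigma> \<in> s1)"
  let ?\<sigma>2 = "(rep sm2)(i := SOME \<sigma>. \<sigma> \<in> s2)"
  obtain x where x: "x \<in> h" "on_path G ?\<sigma>1 x" using r1 reaches_upd_rep[OF sm(1) s(1)] by blast
  obtain y where y: "y \<in> h" "on_path G ?\<sigma>2 y" using r2 reaches_upd_rep[OF sm(2) s(2)] by blast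
  have "on_path G (?\<sigma>2(i := ?\<sigma>1 i)) y"
    using product_path[OF std_prof_upd[OF sm(1) s(1)] std_prof_upd[OF sm(2) s(2)] i h x(1) y(1) x(2) y(2)] .
  moreover have "?\<sigma>2(i := ?\<sigma>1 i) = (rep sm2)(i := SOME \<sigma>. \<sigma> \<in> s1)" by simp
  ultimately show ?thesis using reaches_upd_rep[OF sm(2) s(1)] y(1) by auto
qed

lemma Sm_h_sub: "Sm_h G i h \<subseteq> Sminus G i" unfolding Sm_h_def by blast
lemma Si_h_sub: "Si_h G i h \<subseteq> Strat G i" unfolding Si_h_def by blast

lemma prod_reach2: assumes "i \<in> pl G" "h \<in> info G i" "s \<in> Si_h G i h" "sm \<in> Sm_h G i h"
  shows "reaches G (sm(i := s)) h"
proof -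
  obtain sm1 where "sm1 \<in> Sminus G i" "reaches G (sm1(i := s)) h" using assms(3) unfolding Si_h_def by blast
  moreover obtain s2 where "s2 \<in> Strat G i" "reaches G (sm(i := s2)) h" using assms(4) unfolding Sm_h_def by blast
  ultimately show ?thesis using prod_reach[OF assms(1,2)] assms Sm_h_sub Si_h_sub by blast
qed

lemma reaches_prec: assumes "i \<in> pl G" "prec i g h" "reaches G p h" shows "reaches G p g"
proof -
  obtain y where y: "y \<in> h" "prefix y (zeta G p)" using assms(3) unfolding reaches_def by blast
  obtain x where "x \<in> g" "strict_prefix x y" using prec_D[OF assms(1,2) y(1)] by blast
  then show ?thesis using y(2) unfolding reaches_def by (meson prefix_order.dual_order.trans prefix_order.less_imp_le)
qed

lemma prec_Sm: "i \<in> pl G \<Longrightarrow> prec i g h \<Longrightarrow> Sm_h G i h \<subseteq> Sm_h G i g"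
  unfolding Sm_h_def using reaches_prec by blast

lemma laminar: assumes i: "i \<in> pl G" and s: "s \<in> Strat G i" and h: "h \<in> Hi_of G i s" and h': "h' \<in> Hi_of G i s"
  and sm: "sm \<in> Sm_h G i h" "sm \<in> Sm_h G i h'"
  shows "h = h' \<or> prec i h h' \<or> prec i h' h"
proof -
  have hi: "h \<in> info G i" "s \<in> Si_h G i h" using h unfolding Hi_of_def by auto
  have hi': "h' \<in> info G i" "s \<in> Si_h G i h'" using h' unfolding Hi_of_def by auto
  obtain x where "x \<in> h" "prefix x (zeta G (sm(i := s)))" using prod_reach2[OF i hi(1) hi(2) sm(1)] unfolding reaches_def by blast
  moreover obtain y where "y \<in> h'" "prefix y (zeta G (sm(i := s)))" using prod_reach2[OF i hi'(1) hi'(2) sm(2)] unfolding reaches_def by blast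
  ultimately show ?thesis using comparable[OF i hi(1) hi'(1)] by blast
qed

lemma info_reachable: assumes i: "i \<in> pl G" and h: "h \<in> info G i"
  shows "Sm_h G i h \<noteq> {}" "Si_h G i h \<noteq> {}"
proof -
  obtain x where x: "x \<in> h" using info_ne[OF assms] by blast
  have xh: "x \<in> hist G" using info_active[OF i h x] unfolding active_def nonterm_def by blast
  obtain \<sigma> where \<sigma>: "std_prof \<sigma>" "on_path G \<sigma> x" using reach_hist[OF xh] by blast
  define sm where "sm = (\<lambda>j. if j \<in> pl G - {i} then Rel j `` {\<sigma> j} else undefined)"
  define s where "s = Rel i `` {\<sigma> i}"
  have sms: "sm \<in> Sminus G i" unfolding sm_def Sminus_def PiE_def extensional_def
    using \<sigma>(1) class_Strat unfolding std_prof_def by auto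
  have ss: "s \<in> Strat G i" unfolding s_def using \<sigma>(1) class_Strat i unfolding std_prof_def by auto
  have "\<sigma> j \<in> (sm(i := s)) j" if "j \<in> pl G" for j
    using that \<sigma>(1) class_self unfolding sm_def s_def std_prof_def by auto
  then have "reaches G (sm(i := s)) h" using reaches_iff[OF prof_upd[OF sms ss] \<sigma>(1)] x \<sigma>(2) by blast
  then show "Sm_h G i h \<noteq> {}" "Si_h G i h \<noteq> {}" unfolding Sm_h_def Si_h_def using sms ss by blast+
qed

section \<open>Splicing\<close>

lemma splice:
  assumes i: "i \<in> pl G" and h0: "h0 \<in> info G i" and h: "h \<in> info G i" and pr: "prec i h0 h"
  and s: "s \<in> Si_h G i h" and t: "t \<in> Si_h G i h"
  shows "\<exists>t'\<in>Si_h G i h0. \<forall>sm\<in>Sminus G i.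
     (sm \<in> Sm_h G i h \<longrightarrow> zeta G (sm(i := t')) = zeta G (sm(i := t))) \<and>
     (sm \<notin> Sm_h G i h \<longrightarrow> zeta G (sm(i := t')) = zeta G (sm(i := s)))"
proof -
  have sS: "s \<in> Strat G i" and tS: "t \<in> Strat G i" using s t Si_h_sub by auto
  define \<sigma>s where "\<sigma>s = (SOME \<sigma>. \<sigma> \<in> s)"
  define \<sigma>t where "\<sigma>t = (SOME \<sigma>. \<sigma> \<in> t)"
  have \<sigma>s_in: "\<sigma>s \<in> s" using rep_in[OF sS] unfolding \<sigma>s_def .
  have \<sigma>t_in: "\<sigma>t \<in> t" using rep_in[OF tS] unfolding \<sigma>t_def .
  have \<sigma>s_std: "\<sigma>s \<in> std_strat G i" using \<sigma>s_in strat_sub[OF sS] by blast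
  have \<sigma>t_std: "\<sigma>t \<in> std_strat G i" using \<sigma>t_in strat_sub[OF tS] by blast
  define aft where "aft g \<longleftrightarrow> (\<exists>y\<in>g. \<exists>x\<in>h. prefix x y)" for g
  define \<sigma>' where "\<sigma>' g = (if aft g then \<sigma>t g else \<sigma>s g)" for g
  have \<sigma>'_std: "\<sigma>' \<in> std_strat G i"
    using \<sigma>s_std \<sigma>t_std unfolding std_strat_def \<sigma>'_def by auto
  define t' where "t' = Rel i `` {\<sigma>'}"
  have t'S: "t' \<in> Strat G i" unfolding t'_def using class_Strat[OF \<sigma>'_std] .
  have \<sigma>'_in: "\<sigma>' \<in> t'" unfolding t'_def using class_self[OF \<sigma>'_std] .
  have zt': "zeta G (sm(i := t')) = outcome_std G ((rep sm)(i := \<sigma>'))" if sm: "sm \<in> Sminus G i" for sm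
  proof -
    have p: "prof (sm(i := t'))" using prof_upd[OF sm t'S] .
    have sp: "std_prof ((rep sm)(i := \<sigma>'))"
      using rep_props[OF p] \<sigma>'_std unfolding std_prof_def rep_def by auto
    have "((rep sm)(i := \<sigma>')) j \<in> (sm(i := t')) j" if "j \<in> pl G" for j
      using rep_props(2)[OF p that] \<sigma>'_in unfolding rep_def by auto
    then show ?thesis using outcome_rep[OF p sp] by metis
  qed
  have sp': "std_prof ((rep sm)(i := \<sigma>'))" if sm: "sm \<in> Sminus G i" for sm
    using rep_props(1)[OF prof_upd[OF sm t'S]] \<sigma>'_std unfolding std_prof_def rep_def by auto
  have claim1: "zeta G (sm(i := t')) = zeta G (sm(i := t))" if sm: "sm \<in> Sminus G i" "sm \<in> Sm_h G i h" for sm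
  proof -
    let ?\<rho> = "(rep sm)(i := \<sigma>t)"
    have \<rho>std: "std_prof ?\<rho>" using std_prof_upd[OF sm(1) tS] unfolding \<sigma>t_def .
    let ?z = "zeta G (sm(i := t))"
    have zeq: "?z = outcome_std G ?\<rho>" using zeta_upd_rep unfolding \<sigma>t_def by metis
    have zt: "terminal G ?z" "on_path G ?\<rho> ?z" using outcome_props[OF \<rho>std] zeq by auto
    obtain x where x: "x \<in> h" "prefix x ?z" using prod_reach2[OF i h t sm(2)] unfolding reaches_def by blast
    obtain sms where sms: "sms \<in> Sminus G i" "reaches G (sms(i := s)) h" using s unfolding Si_h_def by blast
    obtain xs where xs: "xs \<in> h" "on_path G ((rep sms)(i := \<sigma>s)) xs"
      using sms(2) reaches_upd_rep[OF sms(1) sS] unfolding \<sigma>s_def by blast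
    have "move G ((rep sm)(i := \<sigma>')) (take k ?z) = move G ?\<rho> (take k ?z)" if k: "k < length ?z" for k
    proof -
      have "\<sigma>' (infoset G i (take k ?z)) = \<sigma>t (infoset G i (take k ?z))" if a: "active G i (take k ?z)"
      proof (cases "aft (infoset G i (take k ?z))")
        case True then show ?thesis unfolding \<sigma>'_def by simp
      next
        case False
        let ?g = "infoset G i (take k ?z)"
        have g: "?g \<in> info G i" "take k ?z \<in> ?g" using infoset_in[OF i a] by auto
        have np: "\<not> prefix x (take k ?z)" using False g(2) x(1) unfolding aft_def by blast
        obtain w where zw: "?z = x @ w" using x(2) prefixE by blast
        have kx: "k < length x"
        proof (rule ccontr)
          assume "\<not> k < length x"
          then have "take k ?z = x @ take (k - length x) w" using zw by simp
          then show False using np by simp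
        qed
        have tk: "take k x = take k ?z" using zw kx by simp
        have nk: "x ! k = ?z ! k" using zw kx by (simp add: nth_append)
        have "(?g, (?z ! k) i) \<in> set (experience G i x)"
          unfolding exp_mem using kx a tk nk by metis
        then have "(?g, (?z ! k) i) \<in> set (experience G i xs)" using precall[OF i h x(1) xs(1)] by simp
        then obtain k' where k': "k' < length xs" "active G i (take k' xs)"
          "?g = infoset G i (take k' xs)" "(?z ! k) i = (xs ! k') i" unfolding exp_mem by blast
        have "xs ! k' = move G ((rep sms)(i := \<sigma>s)) (take k' xs)" using xs(2) k'(1) unfolding on_path_def by blast
        then have e1: "(xs ! k') i = \<sigma>s ?g" using k'(2,3) i unfolding move_def by simp
        have "?z ! k = move G ?\<rho> (take k ?z)" using zt(2) k unfolding on_path_def by blast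
        then have e2: "(?z ! k) i = \<sigma>t ?g" using a i unfolding move_def by simp
        show ?thesis using e1 e2 k'(4) False unfolding \<sigma>'_def by simp
      qed
      then show ?thesis unfolding move_def by (auto intro!: ext)
    qed
    then have "on_path G ((rep sm)(i := \<sigma>')) ?z" using zt(2) unfolding on_path_def by auto
    then have "outcome_std G ((rep sm)(i := \<sigma>')) = ?z" using outcome_eq[OF sp'[OF sm(1)] zt(1)] by blast
    then show ?thesis using zt'[OF sm(1)] by simp
  qed
  have claim2: "zeta G (sm(i := t')) = zeta G (sm(i := s))" if sm: "sm \<in> Sminus G i" "sm \<notin> Sm_h G i h" for sm
  proof -
    let ?\<rho> = "(rep sm)(i := \<sigma>s)"
    have \<rho>std: "std_prof ?\<rho>" using std_prof_upd[OF sm(1) sS] unfolding \<sigma>s_def .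
    let ?z = "zeta G (sm(i := s))"
    have zeq: "?z = outcome_std G ?\<rho>" using zeta_upd_rep unfolding \<sigma>s_def by metis
    have zt: "terminal G ?z" "on_path G ?\<rho> ?z" using outcome_props[OF \<rho>std] zeq by auto
    have nr: "\<not> reaches G (sm(i := s)) h" using sm sS unfolding Sm_h_def by blast
    have "move G ((rep sm)(i := \<sigma>')) (take k ?z) = move G ?\<rho> (take k ?z)" if k: "k < length ?z" for k
    proof -
      have "\<sigma>' (infoset G i (take k ?z)) = \<sigma>s (infoset G i (take k ?z))" if a: "active G i (take k ?z)"
      proof (cases "aft (infoset G i (take k ?z))")
        case False then show ?thesis unfolding \<sigma>'_def by simp
      next
        case True
        let ?g = "infoset G i (take k ?z)"
        have g: "?g \<in> info G i" "take k ?z \<in> ?g" using infoset_in[OF i a] by auto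
        obtain y x0 where yx: "y \<in> ?g" "x0 \<in> h" "prefix x0 y" using True unfolding aft_def by blast
        have pz: "prefix (take k ?z) ?z" by (rule take_is_prefix)
        have "\<exists>x1\<in>h. prefix x1 (take k ?z)"
        proof (cases "x0 = y")
          case True
          then have "?g = h" using info_disj[OF i g(1) h] yx by blast
          then show ?thesis using g(2) by blast
        next
          case False
          then have "strict_prefix x0 y" using yx(3) by (simp add: strict_prefix_def)
          then have "prec i h ?g" unfolding prec_def using yx h g(1) by blast
          then show ?thesis using prec_D[OF i _ g(2)] by (meson prefix_order.less_imp_le)
        qed
        then have "reaches G (sm(i := s)) h" unfolding reaches_def using pz by (meson prefix_order.dual_order.trans)
        then show ?thesis using nr by blast
      qed
      then show ?thesis unfolding move_def by (auto intro!: ext)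
    qed
    then have "on_path G ((rep sm)(i := \<sigma>')) ?z" using zt(2) unfolding on_path_def by auto
    then have "outcome_std G ((rep sm)(i := \<sigma>')) = ?z" using outcome_eq[OF sp'[OF sm(1)] zt(1)] by blast
    then show ?thesis using zt'[OF sm(1)] by simp
  qed
  have "t' \<in> Si_h G i h0"
  proof -
    obtain sm0 where sm0: "sm0 \<in> Sminus G i" "reaches G (sm0(i := t)) h" using t unfolding Si_h_def by blast
    have "sm0 \<in> Sm_h G i h" using sm0 tS unfolding Sm_h_def by blast
    then have "reaches G (sm0(i := t')) h" using claim1[OF sm0(1)] sm0(2) unfolding reaches_def by simp
    then have "reaches G (sm0(i := t')) h0" using reaches_prec[OF i pr] by blast
    then show ?thesis using sm0(1) t'S unfolding Si_h_def by blast
  qed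
  then show ?thesis using claim1 claim2 by blast
qed

end



lemma static_ineq:
  fixes Q :: "'q set" and rs rt :: "'q \<Rightarrow> nat" and K :: real
  assumes "finite Q" "K \<ge> real (card Q) + 1"
  and "(\<exists>q\<in>Q. rt q < rs q) \<or> (\<forall>q\<in>Q. rt q = rs q)"
  shows "(\<Sum>q\<in>Q. (1/K) ^ (rt q) * K ^ (rs q)) \<ge> real (card Q)"
proof -
  have K1: "K \<ge> 1" using assms(2) by simp
  have Kp: "K > 0" using K1 by simp
  have eq: "(1/K) ^ a * K ^ a = 1" for a :: nat using Kp by (simp add: power_one_over)
  have nn: "(1/K) ^ (rt q) * K ^ (rs q) \<ge> 0" for q using Kp by simp
  show ?thesis using assms(3)
  proof
    assume "\<exists>q\<in>Q. rt q < rs q"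
    then obtain q where q: "q \<in> Q" "rt q < rs q" by blast
    have "K ^ (rs q) = K ^ (rt q) * K ^ (rs q - rt q)" using q(2) by (simp add: power_add[symmetric])
    then have "(1/K) ^ (rt q) * K ^ (rs q) = K ^ (rs q - rt q)" using eq[of "rt q"] by (simp add: mult.assoc[symmetric])
    moreover have "K ^ 1 \<le> K ^ (rs q - rt q)" using q(2) K1 by (intro power_increasing) auto
    ultimately have "(1/K) ^ (rt q) * K ^ (rs q) \<ge> K" by simp
    moreover have "(1/K) ^ (rt q) * K ^ (rs q) \<le> (\<Sum>q\<in>Q. (1/K) ^ (rt q) * K ^ (rs q))"
      by (rule member_le_sum[OF q(1)]) (use nn assms(1) in auto)
    ultimately show ?thesis using assms(2) by linarith
  next
    assume "\<forall>q\<in>Q. rt q = rs q"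
    then have "(\<Sum>q\<in>Q. (1/K) ^ (rt q) * K ^ (rs q)) = (\<Sum>q\<in>Q. 1)" using eq by (intro sum.cong) auto
    then show ?thesis by simp
  qed
qed

context wgame begin

definition worse :: "'i \<Rightarrow> ('i,'a) hist \<Rightarrow> ('i,'a) hist set" where
  "worse i z = {z' \<in> Zs G. spref G i z z'}"

definition rank :: "'i \<Rightarrow> ('i,'a) hist \<Rightarrow> nat" where
  "rank i z = card (worse i z)"

lemma pref_refl: "i \<in> pl G \<Longrightarrow> z \<in> Zs G \<Longrightarrow> pref G i z z" using pref_total by blast

lemma rank_iff: assumes i: "i \<in> pl G" and z: "z \<in> Zs G" "z' \<in> Zs G"
  shows "pref G i z z' \<longleftrightarrow> rank i z' \<le> rank i z"
proof
  assume p: "pref G i z z'"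
  have "worse i z' \<subseteq> worse i z"
  proof
    fix w assume "w \<in> worse i z'"
    then have w: "w \<in> Zs G" "pref G i z' w" "\<not> pref G i w z'" unfolding worse_def spref_def by auto
    have "pref G i z w" using pref_trans[OF i z(1) z(2) w(1) p w(2)] .
    moreover have "\<not> pref G i w z" using pref_trans[OF i w(1) z(1) z(2) _ p] w(3) by blast
    ultimately show "w \<in> worse i z" using w(1) unfolding worse_def spref_def by auto
  qed
  then show "rank i z' \<le> rank i z" unfolding rank_def
    using Zs_finite by (intro card_mono) (auto simp: worse_def)
next
  assume r: "rank i z' \<le> rank i z"
  show "pref G i z z'"
  proof (rule ccontr)
    assume np: "\<not> pref G i z z'"
    then have p: "pref G i z' z" using pref_total[OF i z] by blast
    have sub: "worse i z \<subseteq> worse i z'"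
    proof
      fix w assume "w \<in> worse i z"
      then have w: "w \<in> Zs G" "pref G i z w" "\<not> pref G i w z" unfolding worse_def spref_def by auto
      have "pref G i z' w" using pref_trans[OF i z(2) z(1) w(1) p w(2)] .
      moreover have "\<not> pref G i w z'" using pref_trans[OF i w(1) z(2) z(1) _ p] w(3) by blast
      ultimately show "w \<in> worse i z'" using w(1) unfolding worse_def spref_def by auto
    qed
    have "z \<in> worse i z'" using z p np unfolding worse_def spref_def by auto
    moreover have "z \<notin> worse i z" unfolding worse_def spref_def by auto
    ultimately have "worse i z \<subset> worse i z'" using sub by blast
    then have "rank i z < rank i z'" unfolding rank_def
      using Zs_finite by (intro psubset_card_mono) (auto simp: worse_def)
    then show False using r by simp
  qed
qed

definition uK :: "'i \<Rightarrow> real \<Rightarrow> ('i,'a) hist \<Rightarrow> real" where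
  "uK i K z = - ((1/K) ^ rank i z)"

lemma uK_utils: assumes i: "i \<in> pl G" and K: "K > 1" shows "uK i K \<in> utils G i"
  unfolding utils_def
proof (intro CollectI ballI)
  fix z z' assume z: "z \<in> Zs G" "z' \<in> Zs G"
  have "uK i K z' \<le> uK i K z \<longleftrightarrow> (1/K) ^ rank i z \<le> (1/K) ^ rank i z'" unfolding uK_def by simp
  also have "\<dots> \<longleftrightarrow> rank i z' \<le> rank i z" using K by (intro power_decreasing_iff) auto
  also have "\<dots> \<longleftrightarrow> pref G i z z'" using rank_iff[OF i z] by simp
  finally show "uK i K z' \<le> uK i K z \<longleftrightarrow> pref G i z z'" .
qed

lemma easy_dir: assumes i: "i \<in> pl G" and sS: "s \<in> Strat G i" and sr: "seq_rational G i s"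
  shows "\<not> cond_Bdom G i (Strat G) s"
proof
  assume cb: "cond_Bdom G i (Strat G) s"
  obtain u \<mu> where u: "u \<in> utils G i" and cps: "cps G i \<mu>"
    and opt: "\<forall>h\<in>Hi_of G i s. \<forall>t\<in>Si_h G i h.
        (\<Sum>sm\<in>Sminus G i. u (zeta G (sm(i := s))) * \<mu> (Sm_h G i h) sm)
      \<ge> (\<Sum>sm\<in>Sminus G i. u (zeta G (sm(i := t))) * \<mu> (Sm_h G i h) sm)"
    using sr unfolding seq_rational_def by blast
  obtain h where h: "h \<in> Hi_of G i s" and bd: "Bdom G i (Strat G i \<inter> Si_h G i h)
       ((\<Pi>\<^sub>E j\<in>pl G - {i}. Strat G j) \<inter> Sm_h G i h) s"
    using cb unfolding cond_Bdom_def Let_def by blast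
  have hi: "h \<in> info G i" "s \<in> Si_h G i h" using h unfolding Hi_of_def by auto
  have R1: "Strat G i \<inter> Si_h G i h = Si_h G i h" using Si_h_sub by blast
  have R2: "(\<Pi>\<^sub>E j\<in>pl G - {i}. Strat G j) \<inter> Sm_h G i h = Sm_h G i h" using Sm_h_sub unfolding Sminus_def by blast
  define E where "E = Sm_h G i h"
  have Ec: "E \<in> cond_events G i" unfolding E_def cond_events_def using hi by blast
  have ES: "E \<subseteq> Sminus G i" unfolding E_def using Sm_h_sub .
  have fS: "finite (Sminus G i)" using Sminus_finite .
  have nn: "\<forall>sm\<in>Sminus G i. \<mu> E sm \<ge> 0" and s1: "sum (\<mu> E) (Sminus G i) = 1" and sE: "sum (\<mu> E) E = 1"
    using cps Ec unfolding cps_def by blast+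
  have out0: "\<mu> E sm = 0" if "sm \<in> Sminus G i - E" for sm
  proof -
    have "sum (\<mu> E) (Sminus G i) = sum (\<mu> E) E + sum (\<mu> E) (Sminus G i - E)"
      using sum.subset_diff[OF ES fS, of "\<mu> E"] by simp
    then have "sum (\<mu> E) (Sminus G i - E) = 0" using s1 sE by simp
    then show ?thesis using sum_nonneg_eq_0_iff[of "Sminus G i - E" "\<mu> E"] fS nn that by auto
  qed
  define Q where "Q = {sm \<in> E. \<mu> E sm > 0}"
  have Qne: "Q \<noteq> {}"
  proof
    assume "Q = {}"
    then have "\<forall>sm\<in>E. \<mu> E sm = 0" using nn ES unfolding Q_def by force
    then have "sum (\<mu> E) E = 0" by simp
    then show False using sE by simp
  qed
  have QE: "Q \<subseteq> E" unfolding Q_def by blast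
  obtain t where t: "t \<in> Si_h G i h" and wd: "wdom G i (Si_h G i h) Q s t"
    using bd Qne QE unfolding Bdom_def R1 R2 E_def by blast
  have tS: "t \<in> Strat G i" using t Si_h_sub by blast
  have Zs: "zeta G (sm(i := x)) \<in> Zs G" if "sm \<in> Sminus G i" "x \<in> Strat G i" for sm x
    using zeta_props(3)[OF prof_upd[OF that]] .
  have le: "u (zeta G (sm(i := s))) * \<mu> E sm \<le> u (zeta G (sm(i := t))) * \<mu> E sm" if sm: "sm \<in> Sminus G i" for sm
  proof (cases "sm \<in> Q")
    case True
    then have "pref G i (zeta G (sm(i := t))) (zeta G (sm(i := s)))" using wd unfolding wdom_def by blast
    then have "u (zeta G (sm(i := s))) \<le> u (zeta G (sm(i := t)))" using u Zs[OF sm sS] Zs[OF sm tS] unfolding utils_def by blast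
    then show ?thesis using nn sm by (simp add: mult_right_mono)
  next
    case False
    then have "\<mu> E sm = 0" using nn sm out0 unfolding Q_def by force
    then show ?thesis by simp
  qed
  obtain sm0 where sm0: "sm0 \<in> Q" "spref G i (zeta G (sm0(i := t))) (zeta G (sm0(i := s)))"
    using wd unfolding wdom_def by blast
  have sm0S: "sm0 \<in> Sminus G i" using sm0(1) QE ES by blast
  have "u (zeta G (sm0(i := s))) < u (zeta G (sm0(i := t)))"
    using sm0(2) u Zs[OF sm0S sS] Zs[OF sm0S tS] unfolding utils_def spref_def by force
  then have lt: "u (zeta G (sm0(i := s))) * \<mu> E sm0 < u (zeta G (sm0(i := t))) * \<mu> E sm0"
    using sm0(1) unfolding Q_def by simp
  have "(\<Sum>sm\<in>Sminus G i. u (zeta G (sm(i := s))) * \<mu> E sm) < (\<Sum>sm\<in>Sminus G i. u (zeta G (sm(i := t))) * \<mu> E sm)"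
    using sum_strict_mono_ex1[OF fS, of "\<lambda>sm. u (zeta G (sm(i := s))) * \<mu> E sm" "\<lambda>sm. u (zeta G (sm(i := t))) * \<mu> E sm"]
      le lt sm0S by blast
  then show False using opt h t unfolding E_def by fastforce
qed

end



locale hard = wgame +
  fixes i s
  assumes i: "i \<in> pl G" and sS: "s \<in> Strat G i" and ncb: "\<not> cond_Bdom G i (Strat G) s"
begin

lemma fS: "finite (Sminus G i)" by (rule Sminus_finite)

lemma Sminus_ne: "Sminus G i \<noteq> {}"
proof -
  have "\<forall>j\<in>pl G - {i}. Strat G j \<noteq> {}"
  proof
    fix j assume j: "j \<in> pl G - {i}"
    obtain \<sigma> where "\<sigma> \<in> std_strat G j"
    proof -
      have "(\<lambda>h. if h \<in> info G j then SOME a. a \<in> actsI G j h else undefined) \<in> std_strat G j"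
      proof -
        have "(SOME a. a \<in> actsI G j h) \<in> actsI G j h" if h: "h \<in> info G j" for h
        proof -
          obtain x where x: "x \<in> h" using info_ne[of j h] j h by blast
          have "actsI G j h \<noteq> {}" using actsI_eq[of j h x] nt_acts[OF active_nonterm[OF info_active[of j h x]]] j h x by auto
          then show ?thesis by (simp add: some_in_eq)
        qed
        then show ?thesis unfolding std_strat_def by auto
      qed
      then show ?thesis using that by blast
    qed
    then show "Strat G j \<noteq> {}" using class_Strat by blast
  qed
  then show ?thesis unfolding Sminus_def by (simp add: PiE_eq_empty_iff)
qed

lemma ndom: assumes h: "h \<in> Hi_of G i s"
  shows "\<exists>Q. Q \<noteq> {} \<and> Q \<subseteq> Sm_h G i h \<and> (\<forall>t\<in>Si_h G i h. \<not> wdom G i (Si_h G i h) Q s t)"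
proof -
  have hi: "h \<in> info G i" "s \<in> Si_h G i h" using h unfolding Hi_of_def by auto
  have R1: "Strat G i \<inter> Si_h G i h = Si_h G i h" using Si_h_sub by blast
  have R2: "(\<Pi>\<^sub>E j\<in>pl G - {i}. Strat G j) \<inter> Sm_h G i h = Sm_h G i h" using Sm_h_sub unfolding Sminus_def by blast
  have ne: "Si_h G i h \<times> Sm_h G i h \<noteq> {}" using info_reachable[OF i hi(1)] by blast
  have "\<not> ((Strat G i \<inter> Si_h G i h) \<times> ((\<Pi>\<^sub>E j\<in>pl G - {i}. Strat G j) \<inter> Sm_h G i h) \<noteq> {} \<and>
      Bdom G i (Strat G i \<inter> Si_h G i h) ((\<Pi>\<^sub>E j\<in>pl G - {i}. Strat G j) \<inter> Sm_h G i h) s)"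
    using ncb sS h unfolding cond_Bdom_def Let_def by blast
  then have "\<not> Bdom G i (Si_h G i h) (Sm_h G i h) s" unfolding R1 R2 using ne by blast
  then show ?thesis using hi(2) unfolding Bdom_def by blast
qed

definition Qh where "Qh h = (SOME Q. Q \<noteq> {} \<and> Q \<subseteq> Sm_h G i h \<and> (\<forall>t\<in>Si_h G i h. \<not> wdom G i (Si_h G i h) Q s t))"

lemma Qh: assumes "h \<in> Hi_of G i s"
  shows "Qh h \<noteq> {}" "Qh h \<subseteq> Sm_h G i h" "\<And>t. t \<in> Si_h G i h \<Longrightarrow> \<not> wdom G i (Si_h G i h) (Qh h) s t"
  using someI_ex[OF ndom[OF assms]] unfolding Qh_def by blast+

lemma Qh_fin: "h \<in> Hi_of G i s \<Longrightarrow> finite (Qh h)"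
  using Qh(2) Sm_h_sub fS finite_subset by metis

definition KK :: real where "KK = real (card (Sminus G i)) + 2"
definition rs where "rs sm = rank i (zeta G (sm(i := s)))"
definition Nh where "Nh h = (\<Sum>q\<in>Qh h. KK ^ rs q)"
definition bel where "bel h sm = (if sm \<in> Qh h then KK ^ rs sm / Nh h else 0)"

lemma KK: "KK > 1" unfolding KK_def by simp

lemma Nh_pos: "h \<in> Hi_of G i s \<Longrightarrow> Nh h > 0"
  unfolding Nh_def using Qh_fin Qh(1) KK by (intro sum_pos) auto

lemma bel_nn: assumes "h \<in> Hi_of G i s" shows "bel h sm \<ge> 0"
proof -
  have "KK ^ rs sm \<ge> 0" using KK by simp
  then show ?thesis unfolding bel_def using Nh_pos[OF assms] by simp
qed

lemma bel_sum_Q: assumes h: "h \<in> Hi_of G i s" and QA: "Qh h \<subseteq> A" and fA: "finite A"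
  shows "(\<Sum>sm\<in>A. f sm * bel h sm) = (\<Sum>sm\<in>Qh h. f sm * KK ^ rs sm) / Nh h"
proof -
  have "(\<Sum>sm\<in>A. f sm * bel h sm) = (\<Sum>sm\<in>A. if sm \<in> Qh h then f sm * KK ^ rs sm / Nh h else 0)"
    unfolding bel_def by (intro sum.cong) auto
  also have "\<dots> = (\<Sum>sm\<in>A \<inter> Qh h. f sm * KK ^ rs sm / Nh h)" using fA by (simp add: sum.inter_restrict)
  also have "A \<inter> Qh h = Qh h" using QA by blast
  finally show ?thesis by (simp add: sum_divide_distrib)
qed

lemma bel_sum1: assumes h: "h \<in> Hi_of G i s" and QA: "Qh h \<subseteq> A" and fA: "finite A"
  shows "(\<Sum>sm\<in>A. bel h sm) = 1"
proof -
  have "(\<Sum>sm\<in>A. 1 * bel h sm) = (\<Sum>sm\<in>Qh h. 1 * KK ^ rs sm) / Nh h" by (rule bel_sum_Q[OF h QA fA])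
  also have "\<dots> = Nh h / Nh h" unfolding Nh_def by simp
  also have "\<dots> = 1" using Nh_pos[OF h] by simp
  finally show ?thesis by simp
qed

lemma bel_sum_Sm: "h \<in> Hi_of G i s \<Longrightarrow> (\<Sum>sm\<in>Sm_h G i h. bel h sm) = 1"
  using bel_sum1 Qh(2) fS Sm_h_sub finite_subset by metis
lemma bel_sum_S: "h \<in> Hi_of G i s \<Longrightarrow> (\<Sum>sm\<in>Sminus G i. bel h sm) = 1"
  using bel_sum1 Qh(2) fS Sm_h_sub by (meson subset_trans)

lemma zS: "sm \<in> Sminus G i \<Longrightarrow> x \<in> Strat G i \<Longrightarrow> zeta G (sm(i := x)) \<in> Zs G"
  using zeta_props(3)[OF prof_upd] by blast

lemma stat_opt: assumes h: "h \<in> Hi_of G i s" and t: "t \<in> Si_h G i h"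
  shows "(\<Sum>sm\<in>Sminus G i. uK i KK (zeta G (sm(i := s))) * bel h sm)
       \<ge> (\<Sum>sm\<in>Sminus G i. uK i KK (zeta G (sm(i := t))) * bel h sm)"
proof -
  let ?Q = "Qh h"
  have QS: "?Q \<subseteq> Sminus G i" using Qh(2)[OF h] Sm_h_sub by blast
  have fQ: "finite ?Q" using Qh_fin[OF h] .
  have tS: "t \<in> Strat G i" using t Si_h_sub by blast
  define rt where "rt sm = rank i (zeta G (sm(i := t)))" for sm
  have cQ: "card ?Q \<le> card (Sminus G i)" using card_mono[OF fS QS] .
  have Kc: "KK \<ge> real (card ?Q) + 1" using cQ unfolding KK_def by simp
  have Kp: "KK > 0" using KK by simp
  have cond: "(\<exists>q\<in>?Q. rt q < rs q) \<or> (\<forall>q\<in>?Q. rt q = rs q)"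
  proof (cases "\<exists>q\<in>?Q. \<not> pref G i (zeta G (q(i := t))) (zeta G (q(i := s)))")
    case True
    then obtain q where q: "q \<in> ?Q" "\<not> pref G i (zeta G (q(i := t))) (zeta G (q(i := s)))" by blast
    have "rt q < rs q" using q rank_iff[OF i zS zS, of q t q s] QS tS sS unfolding rt_def rs_def by force
    then show ?thesis using q by blast
  next
    case False
    have sSi: "s \<in> Si_h G i h" using h unfolding Hi_of_def by blast
    have "\<not> (\<exists>sm\<in>?Q. spref G i (zeta G (sm(i := t))) (zeta G (sm(i := s))))"
      using Qh(3)[OF h t] False sSi t unfolding wdom_def by blast
    then have "\<forall>q\<in>?Q. rt q = rs q" using False rank_iff[OF i zS zS] QS tS sS unfolding rt_def rs_def spref_def
      by (meson le_antisym subsetD)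
    then show ?thesis by blast
  qed
  have ineq: "(\<Sum>q\<in>?Q. (1/KK) ^ (rt q) * KK ^ (rs q)) \<ge> real (card ?Q)"
    using static_ineq[OF fQ Kc cond] .
  have l: "(\<Sum>sm\<in>Sminus G i. uK i KK (zeta G (sm(i := s))) * bel h sm) = - real (card ?Q) / Nh h"
  proof -
    have "(\<Sum>sm\<in>?Q. uK i KK (zeta G (sm(i := s))) * KK ^ rs sm) = (\<Sum>sm\<in>?Q. -1)"
      unfolding uK_def rs_def using Kp by (intro sum.cong) (auto simp: power_one_over)
    then show ?thesis using bel_sum_Q[OF h QS fS] by simp
  qed
  have r: "(\<Sum>sm\<in>Sminus G i. uK i KK (zeta G (sm(i := t))) * bel h sm) = - (\<Sum>q\<in>?Q. (1/KK) ^ (rt q) * KK ^ (rs q)) / Nh h"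
  proof -
    have "(\<Sum>sm\<in>?Q. uK i KK (zeta G (sm(i := t))) * KK ^ rs sm) = - (\<Sum>q\<in>?Q. (1/KK) ^ (rt q) * KK ^ (rs q))"
      unfolding uK_def rt_def by (simp add: sum_negf)
    then show ?thesis using bel_sum_Q[OF h QS fS] by simp
  qed
  show ?thesis unfolding l r using ineq Nh_pos[OF h] by (simp add: divide_right_mono)
qed


section \<open>Lexicographic levels and the CPS\<close>

lemma Hi_fin: "finite (Hi_of G i s)"
  using info_finite[OF i] unfolding Hi_of_def by auto

definition LL0 where "LL0 = (SOME xs. set xs = Hi_of G i s \<and> distinct xs)"
definition LL where "LL = sort_key (depth i) LL0"

lemma LL: "set LL = Hi_of G i s" "sorted (map (depth i) LL)"
proof -
  have "set LL0 = Hi_of G i s" using someI_ex[OF finite_distinct_list[OF Hi_fin]] unfolding LL0_def by blast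
  then show "set LL = Hi_of G i s" unfolding LL_def by simp
  show "sorted (map (depth i) LL)" unfolding LL_def by simp
qed

lemma LL_nth: "k < length LL \<Longrightarrow> LL ! k \<in> Hi_of G i s" using LL(1) nth_mem by blast

lemma LL_depth: assumes "k \<le> p" "p < length LL" shows "depth i (LL ! k) \<le> depth i (LL ! p)"
  using sorted_nth_mono[OF LL(2), of k p] assms by simp

definition rho where "rho k sm = (if k < length LL then bel (LL ! k) sm else 1 / real (card (Sminus G i)))"
definition lev where "lev E = (LEAST k. 0 < sum (rho k) E)"
definition mu where "mu E sm = (if sm \<in> E then rho (lev E) sm / sum (rho (lev E)) E else 0)"

lemma rho_nn: "rho k sm \<ge> 0" unfolding rho_def using bel_nn LL_nth by auto

lemma rho_sum_nn: "sum (rho k) A \<ge> 0" using rho_nn by (simp add: sum_nonneg)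

lemma cS_pos: "card (Sminus G i) > 0" using fS Sminus_ne by (simp add: card_gt_0_iff)

lemma pos_last: assumes "E \<noteq> {}" "E \<subseteq> Sminus G i" shows "0 < sum (rho (length LL)) E"
proof -
  have fE: "finite E" using assms(2) fS finite_subset by blast
  have "sum (rho (length LL)) E = real (card E) / real (card (Sminus G i))" unfolding rho_def by simp
  moreover have "card E > 0" using fE assms(1) by (simp add: card_gt_0_iff)
  ultimately show ?thesis using cS_pos by simp
qed

lemma lev: assumes "E \<noteq> {}" "E \<subseteq> Sminus G i"
  shows "0 < sum (rho (lev E)) E" "lev E \<le> length LL"
  unfolding lev_def using LeastI[of "\<lambda>k. 0 < sum (rho k) E", OF pos_last[OF assms]]
    Least_le[of "\<lambda>k. 0 < sum (rho k) E", OF pos_last[OF assms]] by auto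

lemma lev_le: "0 < sum (rho k) E \<Longrightarrow> lev E \<le> k"
  unfolding lev_def by (rule Least_le)

lemma sum_mu: assumes "A \<subseteq> E" shows "sum (mu E) A = sum (rho (lev E)) A / sum (rho (lev E)) E"
proof -
  have "sum (mu E) A = (\<Sum>sm\<in>A. rho (lev E) sm / sum (rho (lev E)) E)"
    unfolding mu_def using assms by (intro sum.cong) auto
  then show ?thesis by (simp add: sum_divide_distrib)
qed

lemma ev: assumes "E \<in> cond_events G i" shows "E \<noteq> {}" "E \<subseteq> Sminus G i" "finite E"
proof -
  obtain h where h: "h \<in> info G i" "E = Sm_h G i h" using assms unfolding cond_events_def by blast
  show "E \<noteq> {}" using info_reachable[OF i h(1)] h(2) by simp
  show "E \<subseteq> Sminus G i" using h(2) Sm_h_sub by simp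
  then show "finite E" using fS finite_subset by blast
qed

lemma mu_cps: "cps G i mu"
  unfolding cps_def
proof (intro conjI ballI allI impI)
  fix E assume E: "E \<in> cond_events G i"
  note e = ev[OF E]
  have pos: "0 < sum (rho (lev E)) E" using lev(1)[OF e(1,2)] .
  show "\<And>sm. sm \<in> Sminus G i \<Longrightarrow> 0 \<le> mu E sm" unfolding mu_def using rho_nn pos by auto
  show sE: "sum (mu E) E = 1" using sum_mu[of E E] pos by simp
  have "sum (mu E) (Sminus G i) = sum (mu E) E + sum (mu E) (Sminus G i - E)"
    using sum.subset_diff[OF e(2) fS, of "mu E"] by simp
  moreover have "sum (mu E) (Sminus G i - E) = 0" unfolding mu_def by (intro sum.neutral) auto
  ultimately show "sum (mu E) (Sminus G i) = 1" using sE by simp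
next
  fix E E' A assume E: "E \<in> cond_events G i" and E': "E' \<in> cond_events G i" and AE': "A \<subseteq> E'" and E'E: "E' \<subseteq> E"
  note e = ev[OF E] and e' = ev[OF E']
  let ?k = "lev E"
  have pos: "0 < sum (rho ?k) E" using lev(1)[OF e(1,2)] .
  have pos': "0 < sum (rho (lev E')) E'" using lev(1)[OF e'(1,2)] .
  have fA: "finite A" using AE' e'(3) finite_subset by blast
  show "sum (mu E) A = sum (mu E') A * sum (mu E) E'"
  proof (cases "0 < sum (rho ?k) E'")
    case True
    have k1: "lev E' \<le> ?k" using lev_le[OF True] .
    have "sum (rho (lev E')) E' \<le> sum (rho (lev E')) E"
      using sum_mono2[OF e(3) E'E] rho_nn by blast
    then have k2: "?k \<le> lev E'" using lev_le pos' by (meson less_le_trans)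
    have kk: "lev E' = ?k" using k1 k2 by simp
    show ?thesis
      using sum_mu[of A E] sum_mu[of A E'] sum_mu[of E' E] AE' E'E kk True pos by (simp add: subset_trans)
  next
    case False
    then have z: "sum (rho ?k) E' = 0" using rho_sum_nn[of ?k E'] by simp
    have "sum (rho ?k) A \<le> sum (rho ?k) E'" using sum_mono2[OF e'(3) AE'] rho_nn by blast
    then have zA: "sum (rho ?k) A = 0" using z rho_sum_nn[of ?k A] by simp
    show ?thesis using sum_mu[of A E] sum_mu[of E' E] AE' E'E zA z by (simp add: subset_trans)
  qed
qed


lemma opt: assumes h: "h \<in> Hi_of G i s" and t: "t \<in> Si_h G i h"
  shows "(\<Sum>sm\<in>Sminus G i. uK i KK (zeta G (sm(i := s))) * mu (Sm_h G i h) sm)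
       \<ge> (\<Sum>sm\<in>Sminus G i. uK i KK (zeta G (sm(i := t))) * mu (Sm_h G i h) sm)"
proof -
  define E where "E = Sm_h G i h"
  have hi: "h \<in> info G i" "s \<in> Si_h G i h" using h unfolding Hi_of_def by auto
  have Ene: "E \<noteq> {}" using info_reachable[OF i hi(1)] unfolding E_def by simp
  have ES: "E \<subseteq> Sminus G i" unfolding E_def using Sm_h_sub .
  have fE: "finite E" using ES fS finite_subset by blast
  obtain p where p: "p < length LL" "LL ! p = h" using h LL(1) by (metis in_set_conv_nth)
  have "sum (rho p) E = 1" unfolding rho_def using p bel_sum_Sm[OF h] unfolding E_def by simp
  then have kp: "lev E \<le> p" using lev_le[of p E] by simp
  define k where "k = lev E"
  define h' where "h' = LL ! k"
  have kL: "k < length LL" using kp p(1) unfolding k_def by simp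
  have h': "h' \<in> Hi_of G i s" unfolding h'_def using LL_nth[OF kL] .
  have rk: "rho k = bel h'" unfolding rho_def h'_def using kL by (auto intro!: ext)
  have cpos: "0 < sum (bel h') E" using lev(1)[OF Ene ES] rk unfolding k_def by simp
  have dep: "depth i h' \<le> depth i h" using LL_depth[OF _ p(1), of k] kp p(2) unfolding k_def h'_def by simp
  have "\<exists>sm\<in>E. bel h' sm > 0"
  proof (rule ccontr)
    assume "\<not> (\<exists>sm\<in>E. bel h' sm > 0)"
    then have "\<forall>sm\<in>E. bel h' sm = 0" using bel_nn[OF h'] by (meson not_less order.antisym)
    then have "sum (bel h') E = 0" by simp
    then show False using cpos by simp
  qed
  then obtain sm where sm: "sm \<in> E" "bel h' sm > 0" by blast
  have smh': "sm \<in> Sm_h G i h'" using sm Qh(2)[OF h'] unfolding bel_def by (auto split: if_splits)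
  have lam: "h = h' \<or> prec i h h' \<or> prec i h' h" using laminar[OF i sS h h'] sm(1) smh' unfolding E_def by blast
  have nph: "\<not> prec i h h'" using prec_depth[OF i] dep by (meson leD)
  define f where "f x sm = uK i KK (zeta G (sm(i := x)))" for x sm
  define D where "D x = (\<Sum>sm\<in>Sminus G i. if sm \<in> E then f x sm * bel h' sm else 0)" for x
  have mu_eq: "mu E sm = (if sm \<in> E then bel h' sm / sum (bel h') E else 0)" for sm
    unfolding mu_def rk[symmetric] k_def by simp
  have Deq: "(\<Sum>sm\<in>Sminus G i. f x sm * mu E sm) = D x / sum (bel h') E" for x
    unfolding D_def mu_eq sum_divide_distrib by (intro sum.cong) auto
  have "D t \<le> D s"
  proof (cases "h = h'")
    case True
    have Dx: "D x = (\<Sum>sm\<in>Sminus G i. f x sm * bel h sm)" for x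
      unfolding D_def using True Qh(2)[OF h] unfolding E_def bel_def by (intro sum.cong) auto
    show ?thesis unfolding Dx f_def using stat_opt[OF h t] by simp
  next
    case False
    then have pr: "prec i h' h" using lam nph by blast
    have h'i: "h' \<in> info G i" using h' unfolding Hi_of_def by blast
    obtain t' where t': "t' \<in> Si_h G i h'" and zt: "\<forall>sm\<in>Sminus G i.
       (sm \<in> Sm_h G i h \<longrightarrow> zeta G (sm(i := t')) = zeta G (sm(i := t))) \<and>
       (sm \<notin> Sm_h G i h \<longrightarrow> zeta G (sm(i := t')) = zeta G (sm(i := s)))"
      using splice[OF i h'i hi(1) pr hi(2) t] by blast
    define R where "R = (\<Sum>sm\<in>Sminus G i. if sm \<in> E then 0 else f s sm * bel h' sm)"
    have a: "(\<Sum>sm\<in>Sminus G i. f s sm * bel h' sm) = D s + R"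
      unfolding D_def R_def sum.distrib[symmetric] by (intro sum.cong) auto
    have b: "(\<Sum>sm\<in>Sminus G i. f t' sm * bel h' sm) = D t + R"
      unfolding D_def R_def sum.distrib[symmetric] using zt unfolding E_def f_def by (intro sum.cong) auto
    show ?thesis using stat_opt[OF h' t'] a b unfolding f_def by simp
  qed
  then show ?thesis using Deq[of s] Deq[of t] cpos unfolding f_def E_def[symmetric]
    by (simp add: divide_right_mono)
qed

lemma hard_dir: "seq_rational G i s"
  unfolding seq_rational_def using uK_utils[OF i KK] mu_cps opt by blast

end

theorem theorem1:
  fixes G :: "('i,'a) game" and i :: 'i and s :: "('i,'a) strat"
  assumes "wf_game G" and "i \<in> pl G" and "s \<in> Strat G i"
  shows "seq_rational G i s \<longleftrightarrow> \<not> cond_Bdom G i (Strat G) s"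
proof
  interpret wgame G by (rule wgame.intro) (rule assms(1))
  assume "seq_rational G i s"
  then show "\<not> cond_Bdom G i (Strat G) s" using easy_dir assms(2,3) by blast
next
  assume nc: "\<not> cond_Bdom G i (Strat G) s"
  interpret hard G i s by unfold_locales (use assms nc in auto)
  show "seq_rational G i s" by (rule hard_dir)
qed

end
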